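(* Let $k\ge2$ and let $\chi_1,\chi_2$ be characters of $F^\times$ with $a(\chi_1)=a(\chi_2)=k$. (1) If either $q>3$, or $q=3$ and $a(\chi_1\chi_2^{-1})<k$, then there exists $\mu\in\mathfrak X$ with $a(\mu)=a(\mu\chi_1)=a(\mu\chi_2)=k$. (2) If $q=3$ and $a(\chi_1\chi_2^{-1})=k$, then $\max\{a(\mu\chi_1)+a(\mu\chi_2):\mu\in\mathfrak X'_k\}=2k-1$. (3) If $q=2$ and $a(\chi_1\chi_2^{-1})<k-1$: if $k>2$ there exists $\mu\in\mathfrak X$ with $a(\mu)=k$ and $a(\mu\chi_1)=a(\mu\chi_2)=k-1$; if $k=2$ then every $\mu\in\mathfrak X$ with $a(\mu)=2$ satisfies $a(\mu\chi_1)=a(\mu\chi_2)=0$. (4) If $q=2$ and $a(\chi_1\chi_2^{-1})=k-1$, then $k\ge3$; if $k\ge4$ then $\max\{a(\mu\chi_1)+a(\mu\chi_2):\mu\in\mathfrak X'_k\}=2k-3$; if $k=3$ then every $\mu\in\mathfrak X$ with $a(\mu)=3$ satisfies $\{a(\mu\chi_1),a(\mu\chi_2)\}=\{2,0\}$.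
   Context: $F$ is a non-archimedean local field of characteristic $0$ with ring of integers $\mathfrak o$, maximal ideal $\mathfrak p$, uniformiser $\varpi$, and $q=\#(\mathfrak o/\mathfrak p)$. Put $U_0=\mathfrak o^\times$ and $U_k=1+\varpi^k\mathfrak o$ for $k\ge1$. For a continuous character $\chi$ of $F^\times$, $a(\chi)$ is the least integer $k\ge0$ with $\chi(U_k)=\{1\}$. $\mathfrak X$ denotes the group of characters $\mu$ of $F^\times$ with $\mu(\varpi)=1$, and $\mathfrak X'_k=\{\mu\in\mathfrak X:a(\mu)=k\}$. *)

theory Defs
  imports Complex_Main
begin

text \<open>A non-archimedean local field of characteristic 0 is modelled as a type
  'a of class field_char_0 together with a normalised discrete valuation
  v on the nonzero elements (values at 0 are irrelevant and never used),
  which is complete and has finite residue field.\<close>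

definition val_ring :: "('a::field \<Rightarrow> int) \<Rightarrow> 'a set" where
  "val_ring v = {x. x = 0 \<or> v x \<ge> 0}"

definition val_ideal :: "('a::field \<Rightarrow> int) \<Rightarrow> 'a set" where
  "val_ideal v = {x. x = 0 \<or> v x \<ge> 1}"

definition residue_field :: "('a::field \<Rightarrow> int) \<Rightarrow> 'a set set" where
  "residue_field v = val_ring v // {(x, y). x \<in> val_ring v \<and> y \<in> val_ring v \<and> x - y \<in> val_ideal v}"

definition resq :: "('a::field \<Rightarrow> int) \<Rightarrow> nat" where
  "resq v = card (residue_field v)"

definition val_cauchy :: "('a::field \<Rightarrow> int) \<Rightarrow> (nat \<Rightarrow> 'a) \<Rightarrow> bool" where
  "val_cauchy v s \<longleftrightarrow> (\<forall>N::int. \<exists>M. \<forall>m\<ge>M. \<forall>n\<ge>M. s m = s n \<or> v (s m - s n) \<ge> N)"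

definition val_converges :: "('a::field \<Rightarrow> int) \<Rightarrow> (nat \<Rightarrow> 'a) \<Rightarrow> bool" where
  "val_converges v s \<longleftrightarrow> (\<exists>L. \<forall>N::int. \<exists>M. \<forall>n\<ge>M. s n = L \<or> v (s n - L) \<ge> N)"

definition local_field :: "('a::field_char_0 \<Rightarrow> int) \<Rightarrow> bool" where
  "local_field v \<longleftrightarrow>
     (\<forall>x y. x \<noteq> 0 \<longrightarrow> y \<noteq> 0 \<longrightarrow> v (x * y) = v x + v y) \<and>
     (\<forall>x y. x \<noteq> 0 \<longrightarrow> y \<noteq> 0 \<longrightarrow> x + y \<noteq> 0 \<longrightarrow> v (x + y) \<ge> min (v x) (v y)) \<and>
     (\<exists>w. w \<noteq> 0 \<and> v w = 1) \<and>
     (\<forall>s. val_cauchy v s \<longrightarrow> val_converges v s) \<and>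
     finite (residue_field v)"

definition unitU :: "('a::field \<Rightarrow> int) \<Rightarrow> nat \<Rightarrow> 'a set" where
  "unitU v k = (if k = 0 then {x. x \<noteq> 0 \<and> v x = 0}
                else {x. x = 1 \<or> (x \<noteq> 0 \<and> x \<noteq> 1 \<and> v (x - 1) \<ge> int k)})"

definition is_char :: "('a::field \<Rightarrow> int) \<Rightarrow> ('a \<Rightarrow> complex) \<Rightarrow> bool" where
  "is_char v \<chi> \<longleftrightarrow>
     (\<forall>x y. x \<noteq> 0 \<longrightarrow> y \<noteq> 0 \<longrightarrow> \<chi> (x * y) = \<chi> x * \<chi> y) \<and>
     (\<forall>x. x \<noteq> 0 \<longrightarrow> \<chi> x \<noteq> 0) \<and>
     (\<forall>x. x \<noteq> 0 \<longrightarrow> (\<forall>\<epsilon>>0. \<exists>N::int. \<forall>y. y \<noteq> 0 \<longrightarrow> (y = x \<or> v (y - x) \<ge> N)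
          \<longrightarrow> cmod (\<chi> y - \<chi> x) < \<epsilon>))"

definition cond :: "('a::field \<Rightarrow> int) \<Rightarrow> ('a \<Rightarrow> complex) \<Rightarrow> nat" where
  "cond v \<chi> = (LEAST k. \<forall>u\<in>unitU v k. \<chi> u = 1)"

definition charX :: "('a::field \<Rightarrow> int) \<Rightarrow> 'a \<Rightarrow> ('a \<Rightarrow> complex) set" where
  "charX v \<pi> = {\<mu>. is_char v \<mu> \<and> \<mu> \<pi> = 1}"

definition charX' :: "('a::field \<Rightarrow> int) \<Rightarrow> 'a \<Rightarrow> nat \<Rightarrow> ('a \<Rightarrow> complex) set" where
  "charX' v \<pi> k = {\<mu> \<in> charX v \<pi>. cond v \<mu> = k}"

end

theory Submission
  imports Defs
begin

lemma cos_le_half: assumes "pi/3 \<le> a" "a \<le> 4*pi/3" shows "cos a \<le> 1/2"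
proof (cases "a \<le> pi")
  case True
  then have "cos a \<le> cos (pi/3)" using assms by (intro cos_monotone_0_pi_le) auto
  then show ?thesis by (simp add: cos_60)
next
  case False
  have "cos a = - cos (a - pi)" using cos_periodic_pi[of "a - pi"] by simp
  moreover have "cos (a - pi) \<ge> 0" using False assms by (intro cos_ge_zero) auto
  ultimately show ?thesis by simp
qed

lemma cmod_cis_minus1: "(cmod (cis a - 1))^2 = 2 - 2 * cos a"
proof -
  have "(cmod (cis a - 1))^2 = (cos a - 1)^2 + (sin a)^2"
    by (simp add: cmod_def cis.code)
  also have "\<dots> = 2 - 2 * cos a" using sin_cos_squared_add[of a] by (simp add: power2_eq_square algebra_simps)
  finally show ?thesis .
qed

lemma cis_pos_bad: assumes t: "0 < t" "t \<le> pi" shows "\<exists>m::nat. cmod (cis t ^ m - 1) \<ge> 1"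
proof -
  define m where "m = nat \<lceil>(pi/3)/t\<rceil>"
  have p: "(pi/3)/t > 0" using t by simp
  have m1: "real m \<ge> (pi/3)/t" unfolding m_def using p by linarith
  have m2: "real m < (pi/3)/t + 1" unfolding m_def using p by linarith
  have a1: "real m * t \<ge> pi/3" using m1 t by (simp add: field_simps)
  have "real m * t < ((pi/3)/t + 1) * t" using m2 t by (intro mult_strict_right_mono) auto
  also have "\<dots> = pi/3 + t" using t by (simp add: field_simps)
  finally have a2: "real m * t \<le> 4*pi/3" using t by simp
  have "cos (real m * t) \<le> 1/2" using cos_le_half a1 a2 by blast
  then have "(cmod (cis (real m * t) - 1))^2 \<ge> 1" using cmod_cis_minus1 by simp
  then have "cmod (cis (real m * t) - 1) \<ge> 1"
    by (metis abs_of_nonneg norm_ge_zero one_le_power real_sqrt_abs real_sqrt_ge_one real_sqrt_pow2_iff)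
  then show ?thesis by (intro exI[of _ m]) (simp add: DeMoivre)
qed

lemma subgroup_disc: fixes z :: complex
  assumes z: "z \<noteq> 0" and h: "\<And>m. cmod (z ^ m - 1) < 1" "\<And>m. cmod (inverse z ^ m - 1) < 1"
  shows "z = 1"
proof -
  have le1: "cmod w \<le> 1" if "\<And>m. cmod (w ^ m - 1) < 1" for w :: complex
  proof (rule ccontr)
    assume "\<not> cmod w \<le> 1"
    then obtain m where "2 < cmod w ^ m" using real_arch_pow by fastforce
    moreover have "cmod (w ^ m) - cmod 1 \<le> cmod (w ^ m - 1)" by (rule norm_triangle_ineq2)
    ultimately have "cmod (w ^ m - 1) > 1" by (simp add: norm_power)
    with that show False by (metis not_less_iff_gr_or_eq)
  qed
  have "cmod z \<le> 1" using le1 h(1) by blast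
  moreover have "cmod (inverse z) \<le> 1" using le1 h(2) by blast
  moreover have "cmod (inverse z) = 1 / cmod z" by (simp add: norm_inverse divide_inverse)
  moreover have "cmod z > 0" using z by simp
  ultimately have n1: "cmod z = 1" by (simp add: field_simps)
  define th where "th = Arg z"
  have zc: "z = cis th" unfolding th_def using z n1 by (simp add: cis_Arg sgn_div_norm)
  have thr: "- pi < th" "th \<le> pi" unfolding th_def using Arg_bounded by auto
  show ?thesis
  proof (rule ccontr)
    assume "z \<noteq> 1"
    then have "th \<noteq> 0" using zc by auto
    show False
    proof (cases "th > 0")
      case True
      then obtain m where "cmod (cis th ^ m - 1) \<ge> 1" using cis_pos_bad thr by blast
      then show False using h(1)[of m] zc by simp
    next
      case False
      then have "0 < - th" "- th \<le> pi" using \<open>th \<noteq> 0\<close> thr by auto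
      then obtain m where "cmod (cis (- th) ^ m - 1) \<ge> 1" using cis_pos_bad by blast
      moreover have "inverse z = cis (- th)" using zc by (simp add: cis_inverse)
      ultimately show False using h(2)[of m] by simp
    qed
  qed
qed

locale LF =
  fixes v :: "'a::field_char_0 \<Rightarrow> int" and \<pi> :: 'a
  assumes lf: "local_field v" and pi0: "\<pi> \<noteq> 0" and vpi: "v \<pi> = 1"
begin

definition vge :: "'a \<Rightarrow> int \<Rightarrow> bool" where
  "vge x n \<longleftrightarrow> x = 0 \<or> v x \<ge> n"

lemma vmult: "x \<noteq> 0 \<Longrightarrow> y \<noteq> 0 \<Longrightarrow> v (x * y) = v x + v y"
  using lf unfolding local_field_def by blast

lemma vultra: "x \<noteq> 0 \<Longrightarrow> y \<noteq> 0 \<Longrightarrow> x + y \<noteq> 0 \<Longrightarrow> v (x + y) \<ge> min (v x) (v y)"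
  using lf unfolding local_field_def by blast

lemma finres: "finite (residue_field v)"
  using lf unfolding local_field_def by blast

lemma v1[simp]: "v 1 = 0"
  using vmult[of 1 1] by simp

lemma vinv: "x \<noteq> 0 \<Longrightarrow> v (inverse x) = - v x"
  using vmult[of x "inverse x"] by simp

lemma vdiv: "x \<noteq> 0 \<Longrightarrow> y \<noteq> 0 \<Longrightarrow> v (x / y) = v x - v y"
  by (simp add: divide_inverse vmult vinv)

lemma vneg1[simp]: "v (-1) = 0"
  using vmult[of "-1" "-1"] by simp

lemma vneg: "x \<noteq> 0 \<Longrightarrow> v (- x) = v x"
  using vmult[of "-1" x] by simp

lemma vpow: "x \<noteq> 0 \<Longrightarrow> v (x ^ n) = int n * v x"
  by (induction n) (auto simp: vmult algebra_simps)

lemma vpowi: assumes "x \<noteq> 0" shows "v (x powi m) = m * v x"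
proof (cases "m \<ge> 0")
  case True
  then obtain n where "m = int n" by (metis nonneg_eq_int)
  then show ?thesis using vpow[OF assms] by (simp add: power_int_def)
next
  case False
  then obtain n where "m = - int n" by (metis neg_int_cases not_le less_imp_le of_nat_0_less_iff)
  have "inverse x ^ n = inverse (x ^ n)" by (simp add: power_inverse)
  then show ?thesis using assms vpow[of x n] \<open>m = - int n\<close> by (simp add: power_int_def vinv)
qed

lemma vpi_powi: "v (\<pi> powi m) = m"
  using vpowi[OF pi0] vpi by simp

lemma vge_0[simp]: "vge 0 n" by (simp add: vge_def)

lemma vge_mono: "vge x n \<Longrightarrow> m \<le> n \<Longrightarrow> vge x m"
  by (auto simp: vge_def)

lemma vge_add: assumes "vge x n" "vge y n" shows "vge (x + y) n"
proof (cases "x = 0 \<or> y = 0 \<or> x + y = 0")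
  case True
  then show ?thesis using assms by (auto simp: vge_def)
next
  case False
  then have "v (x+y) \<ge> min (v x) (v y)" using vultra by blast
  with assms False show ?thesis by (auto simp: vge_def)
qed

lemma vge_neg: "vge (- x) n \<longleftrightarrow> vge x n"
  by (cases "x = 0") (auto simp: vge_def vneg)

lemma vge_diff: "vge x n \<Longrightarrow> vge y n \<Longrightarrow> vge (x - y) n"
  using vge_add[of x n "-y"] vge_neg by simp

lemma vge_mult: "vge x n \<Longrightarrow> vge y m \<Longrightarrow> vge (x * y) (n + m)"
  by (cases "x = 0"; cases "y = 0") (auto simp: vge_def vmult)

lemma vge_mult_unit: "v u = 0 \<Longrightarrow> u \<noteq> 0 \<Longrightarrow> vge (x * u) n \<longleftrightarrow> vge x n"
  by (cases "x = 0") (auto simp: vge_def vmult)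

lemma vge_div_unit: "v u = 0 \<Longrightarrow> u \<noteq> 0 \<Longrightarrow> vge (x / u) n \<longleftrightarrow> vge x n"
  by (cases "x = 0") (auto simp: vge_def vdiv)

lemma vge_pi: "vge (x * \<pi> powi m) n \<longleftrightarrow> vge x (n - m)"
  using pi0 by (cases "x = 0") (auto simp: vge_def vmult vpi_powi)

lemma unit_of_vge: assumes "vge (x - 1) 1" shows "x \<noteq> 0" "v x = 0"
proof -
  show "x \<noteq> 0" using assms by (auto simp: vge_def)
  have "vge (x - 1) 0" using assms vge_mono by simp
  moreover have "vge 1 0" by (simp add: vge_def)
  ultimately have a: "vge x 0" using vge_add[of "x - 1" 0 1] by simp
  have "\<not> vge 1 1" by (simp add: vge_def)
  moreover have "1 = x - (x - 1)" by simp
  ultimately have "\<not> vge x 1" using vge_diff[of x 1 "x - 1"] assms by metis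
  with a \<open>x \<noteq> 0\<close> show "v x = 0" by (auto simp: vge_def)
qed

abbreviation U where "U \<equiv> unitU v"

lemma U_Suc: "x \<in> U (Suc j) \<longleftrightarrow> vge (x - 1) (int (Suc j))"
proof -
  have "vge (x - 1) (int (Suc j)) \<Longrightarrow> x \<noteq> 0"
    using unit_of_vge vge_mono[of "x - 1" "int (Suc j)" 1] by auto
  then show ?thesis by (auto simp: unitU_def vge_def)
qed

lemma U_pos: "j > 0 \<Longrightarrow> x \<in> U j \<longleftrightarrow> vge (x - 1) (int j)"
  using U_Suc[of x "j - 1"] by simp

lemma U_0: "x \<in> U 0 \<longleftrightarrow> x \<noteq> 0 \<and> v x = 0"
  by (simp add: unitU_def)

lemma U_unit: "x \<in> U j \<Longrightarrow> x \<noteq> 0 \<and> v x = 0"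
  by (cases j) (auto simp: U_0 U_Suc dest: unit_of_vge vge_mono[where m=1])

lemma U_mono: "j \<le> i \<Longrightarrow> x \<in> U i \<Longrightarrow> x \<in> U j"
proof (cases "j = 0")
  case True
  then show "x \<in> U i \<Longrightarrow> ?thesis" using U_unit U_0 by auto
next
  case False
  assume "j \<le> i" "x \<in> U i"
  then show ?thesis using False U_pos[of j x] U_pos[of i x] vge_mono[of "x - 1" "int i" "int j"] by auto
qed

lemma U_one[simp]: "1 \<in> U j"
  by (cases j) (auto simp: U_0 U_Suc)

lemma U_mult: assumes "x \<in> U j" "y \<in> U j" shows "x * y \<in> U j"
proof (cases "j = 0")
  case True
  then show ?thesis using assms by (auto simp: U_0 vmult)
next
  case False
  have "x * y - 1 = x * (y - 1) + (x - 1)" by (simp add: algebra_simps)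
  moreover have "vge (x * (y - 1)) j"
    using vge_mult_unit[of x "y - 1" j] U_unit[OF assms(1)] assms(2) False U_pos
    by (simp add: mult.commute)
  moreover have "vge (x - 1) j" using assms(1) False U_pos by simp
  moreover have "vge (x * (y - 1) + (x - 1)) j" using vge_add calculation(2,3) by blast
  ultimately have "vge (x * y - 1) j" by metis
  then show ?thesis using False U_pos by simp
qed

lemma U_inv: assumes "x \<in> U j" shows "inverse x \<in> U j"
proof (cases "j = 0")
  case True
  then show ?thesis using assms by (auto simp: U_0 vinv)
next
  case False
  have x: "x \<noteq> 0" "v x = 0" using U_unit[OF assms] by auto
  have "inverse x - 1 = - ((x - 1) / x)" using x by (simp add: field_simps)
  moreover have "vge ((x - 1) / x) j" using vge_div_unit[OF x(2) x(1)] assms False U_pos by simp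
  ultimately show ?thesis using False U_pos vge_neg by simp
qed

lemma U_div: "x \<in> U j \<Longrightarrow> y \<in> U j \<Longrightarrow> x / y \<in> U j"
  by (simp add: divide_inverse U_mult U_inv)

lemma U_pow: "x \<in> U j \<Longrightarrow> x ^ n \<in> U j"
  by (induction n) (auto intro: U_mult)

definition triv :: "('a \<Rightarrow> complex) \<Rightarrow> nat \<Rightarrow> bool" where
  "triv f n \<longleftrightarrow> (\<forall>u\<in>U n. f u = 1)"

definition mchar :: "('a \<Rightarrow> complex) \<Rightarrow> bool" where
  "mchar f \<longleftrightarrow> (\<forall>x y. x \<noteq> 0 \<longrightarrow> y \<noteq> 0 \<longrightarrow> f (x * y) = f x * f y) \<and> (\<forall>x. x \<noteq> 0 \<longrightarrow> f x \<noteq> 0)"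

lemma triv_mono: "triv f n \<Longrightarrow> n \<le> m \<Longrightarrow> triv f m"
  using U_mono unfolding triv_def by blast

lemma cond_triv: assumes "\<exists>n. triv f n" shows "triv f (cond v f)"
proof -
  obtain n where "triv f n" using assms by blast
  then show ?thesis unfolding cond_def triv_def by (rule LeastI)
qed

lemma cond_le_iff: assumes "\<exists>n. triv f n" shows "cond v f \<le> m \<longleftrightarrow> triv f m"
proof
  assume "cond v f \<le> m" then show "triv f m" using triv_mono cond_triv[OF assms] by blast
next
  assume "triv f m" then show "cond v f \<le> m" unfolding cond_def triv_def by (rule Least_le)
qed

lemma cond_eq_iff: assumes "\<exists>n. triv f n" and "k > 0"
  shows "cond v f = k \<longleftrightarrow> triv f k \<and> \<not> triv f (k - 1)"
  using cond_le_iff[OF assms(1), of k] cond_le_iff[OF assms(1), of "k - 1"] assms(2) by auto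

lemma cond_eq0_iff: assumes "\<exists>n. triv f n"
  shows "cond v f = 0 \<longleftrightarrow> triv f 0"
  using cond_le_iff[OF assms(1), of 0] by auto

lemma cond_cong: assumes "\<And>x. x \<in> U 0 \<Longrightarrow> f x = g x" shows "cond v f = cond v g"
proof -
  have "\<And>k. (\<forall>u\<in>U k. f u = 1) \<longleftrightarrow> (\<forall>u\<in>U k. g u = 1)"
    using assms U_mono[of 0] by auto
  then show ?thesis unfolding cond_def by simp
qed

lemma triv_cong: assumes "\<And>x. x \<in> U 0 \<Longrightarrow> f x = g x" shows "triv f n \<longleftrightarrow> triv g n"
  using assms U_mono[of 0] unfolding triv_def by auto

lemma mchar_1: assumes "mchar f" shows "f 1 = 1"
proof -
  have "f 1 = f 1 * f 1" "f 1 \<noteq> 0" using assms unfolding mchar_def by (metis mult_1 one_neq_zero)+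
  then show ?thesis by simp
qed

lemma mchar_inv: assumes "mchar f" "x \<noteq> 0" shows "f (inverse x) = inverse (f x)"
proof -
  have "f (x * inverse x) = f x * f (inverse x)" using assms unfolding mchar_def by (meson inverse_nonzero_iff_nonzero)
  then have "f x * f (inverse x) = 1" using assms mchar_1[OF assms(1)] by simp
  then show ?thesis by (simp add: inverse_unique)
qed

lemma mchar_pow: "mchar f \<Longrightarrow> x \<noteq> 0 \<Longrightarrow> f (x ^ n) = f x ^ n"
  by (induction n) (auto simp: mchar_1 mchar_def)

lemma char_of: assumes "mchar f" "triv f n" shows "is_char v f"
  unfolding is_char_def
proof (intro conjI allI impI)
  fix x y :: 'a assume "x \<noteq> 0" "y \<noteq> 0" then show "f (x * y) = f x * f y" using assms unfolding mchar_def by blast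
next
  fix x :: 'a assume "x \<noteq> 0" then show "f x \<noteq> 0" using assms unfolding mchar_def by blast
next
  fix x :: 'a and e :: real assume x: "x \<noteq> 0" and e: "e > 0"
  show "\<exists>N. \<forall>y. y \<noteq> 0 \<longrightarrow> y = x \<or> v (y - x) \<ge> N \<longrightarrow> cmod (f y - f x) < e"
  proof (intro exI allI impI)
    fix y :: 'a assume y: "y \<noteq> 0" and h: "y = x \<or> v (y - x) \<ge> v x + int n + 1"
    have "y / x \<in> U (Suc n)"
    proof -
      have "y / x - 1 = (y - x) / x" using x by (simp add: field_simps)
      moreover have "vge ((y - x) / x) (int (Suc n))"
        using h x by (cases "y = x") (auto simp: vge_def vdiv)
      ultimately show ?thesis using U_Suc by simp
    qed
    then have "f (y / x) = 1" using assms(2) U_mono[of n "Suc n"] unfolding triv_def by auto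
    moreover have "f y = f x * f (y / x)"
    proof -
      have "f (x * (y / x)) = f x * f (y / x)" using assms(1) x y unfolding mchar_def by (meson divide_eq_0_iff)
      then show ?thesis using x by simp
    qed
    ultimately show "cmod (f y - f x) < e" using e by simp
  qed
qed

lemma char_mchar: "is_char v f \<Longrightarrow> mchar f"
  unfolding is_char_def mchar_def by blast

lemma char_triv: assumes "is_char v f" shows "\<exists>n. triv f n"
proof -
  have mc: "mchar f" using char_mchar[OF assms] .
  have "(1::'a) \<noteq> 0" by simp
  then obtain N where N: "\<forall>y. y \<noteq> 0 \<longrightarrow> (y = 1 \<or> v (y - 1) \<ge> N) \<longrightarrow> cmod (f y - f 1) < 1"
    using assms unfolding is_char_def by (meson zero_less_one)
  define n where "n = nat (max N 1)"
  have n0: "n > 0" "int n \<ge> N" unfolding n_def by auto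
  have B: "cmod (f y - 1) < 1" if "y \<in> U n" for y
  proof -
    have "vge (y - 1) n" using that n0 U_pos by simp
    then have "y = 1 \<or> v (y - 1) \<ge> N" using n0 by (auto simp: vge_def)
    then show ?thesis using N U_unit[OF that] mchar_1[OF mc] by auto
  qed
  have "triv f n" unfolding triv_def
  proof
    fix u assume u: "u \<in> U n"
    have u0: "u \<noteq> 0" using U_unit[OF u] by simp
    show "f u = 1"
    proof (rule subgroup_disc)
      show "f u \<noteq> 0" using mc u0 unfolding mchar_def by simp
      fix m :: nat
      show "cmod (f u ^ m - 1) < 1" using B[OF U_pow[OF u, of m]] unfolding mchar_pow[OF mc u0] .
      have "inverse u ^ m \<in> U n" using U_pow U_inv u by blast
      moreover have "f (inverse u ^ m) = inverse (f u) ^ m"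
      proof -
        have "f (inverse u ^ m) = f (inverse u) ^ m" by (rule mchar_pow[OF mc]) (simp add: u0)
        then show ?thesis by (simp only: mchar_inv[OF mc u0])
      qed
      ultimately show "cmod (inverse (f u) ^ m - 1) < 1" using B by force
    qed
  qed
  then show ?thesis by blast
qed

lemma char_iff: "is_char v f \<longleftrightarrow> mchar f \<and> (\<exists>n. triv f n)"
  by (meson char_mchar char_triv char_of)

end

context LF begin

definition rr :: "('a \<times> 'a) set" where
  "rr = {(x, y). x \<in> val_ring v \<and> y \<in> val_ring v \<and> x - y \<in> val_ideal v}"

lemma vring: "x \<in> val_ring v \<longleftrightarrow> vge x 0"
  by (auto simp: val_ring_def vge_def)

lemma videal: "x \<in> val_ideal v \<longleftrightarrow> vge x 1"
  by (auto simp: val_ideal_def vge_def)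

lemma rr_iff: "(x, y) \<in> rr \<longleftrightarrow> vge x 0 \<and> vge y 0 \<and> vge (x - y) 1"
  by (simp add: rr_def vring videal)

lemma resf: "residue_field v = {rr `` {a} | a. vge a 0}"
  unfolding residue_field_def rr_def[symmetric] quotient_def by (auto simp: vring)

lemma resq_card: "resq v = card (residue_field v)"
  by (simp add: resq_def)

lemma cong_trans: "vge (a - b) 1 \<Longrightarrow> vge (b - c) 1 \<Longrightarrow> vge (a - c) 1"
  using vge_add[of "a - b" 1 "b - c"] by simp

lemma cong_sym: "vge (a - b) n \<Longrightarrow> vge (b - a) n"
  using vge_neg[of "a - b" n] by simp

lemma class_eq: assumes "vge (a - b) 1" shows "rr `` {a} = rr `` {b}"
proof -
  have "vge a 0 \<longleftrightarrow> vge b 0"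
    using assms vge_add[of "a - b" 0 b] vge_diff[of a 0 "a - b"] vge_mono[of "a - b" 1 0] by force
  moreover have "\<And>y. vge (a - y) 1 \<longleftrightarrow> vge (b - y) 1"
    using assms cong_trans cong_sym by blast
  ultimately show ?thesis by (auto simp: rr_iff)
qed

lemma res_card_le:
  assumes T: "T \<subseteq> {x. vge x 0}" and nc: "\<And>x y. x \<in> T \<Longrightarrow> y \<in> T \<Longrightarrow> x \<noteq> y \<Longrightarrow> \<not> vge (x - y) 1"
  shows "card T \<le> resq v"
proof -
  have "inj_on (\<lambda>t. rr `` {t}) T"
  proof (rule inj_onI)
    fix x y assume xy: "x \<in> T" "y \<in> T" "rr `` {x} = rr `` {y}"
    have "y \<in> rr `` {y}" using xy T by (auto simp: rr_iff vge_def)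
    then have "vge (x - y) 1" using xy by (auto simp: rr_iff)
    then show "x = y" using nc xy by blast
  qed
  moreover have "(\<lambda>t. rr `` {t}) ` T \<subseteq> residue_field v" using T by (auto simp: resf)
  ultimately show ?thesis using card_inj_on_le finres resq_card by metis
qed

lemma res_reps: "\<exists>T. finite T \<and> T \<subseteq> {x. vge x 0} \<and> card T = resq v \<and>
   (\<forall>x\<in>T. \<forall>y\<in>T. x \<noteq> y \<longrightarrow> \<not> vge (x - y) 1)"
proof -
  define rep where "rep C = (SOME a. vge a 0 \<and> C = rr `` {a})" for C
  have rep: "vge (rep C) 0 \<and> C = rr `` {rep C}" if "C \<in> residue_field v" for C
    using that unfolding resf rep_def by (smt (verit, best) mem_Collect_eq someI_ex)
  have inj: "inj_on rep (residue_field v)"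
    by (rule inj_onI) (metis rep)
  define T where "T = rep ` residue_field v"
  have "finite T" unfolding T_def using finres by simp
  moreover have "T \<subseteq> {x. vge x 0}" unfolding T_def using rep by auto
  moreover have "card T = resq v" unfolding T_def using card_image[OF inj] resq_card by simp
  moreover have "\<forall>x\<in>T. \<forall>y\<in>T. x \<noteq> y \<longrightarrow> \<not> vge (x - y) 1"
    unfolding T_def using rep class_eq by (metis image_iff)
  ultimately show ?thesis by blast
qed

lemma reps3: assumes "resq v \<ge> 3"
  shows "\<exists>a b c. vge a 0 \<and> vge b 0 \<and> vge c 0 \<and> \<not> vge (a - b) 1 \<and> \<not> vge (a - c) 1 \<and> \<not> vge (b - c) 1"
proof -
  obtain T where T: "finite T" "T \<subseteq> {x. vge x 0}" "card T = resq v"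
    "\<forall>x\<in>T. \<forall>y\<in>T. x \<noteq> y \<longrightarrow> \<not> vge (x - y) 1" using res_reps by blast
  then have "Suc (Suc (Suc 0)) \<le> card T" using assms by simp
  then obtain a B where B: "T = insert a B" "a \<notin> B" "Suc (Suc 0) \<le> card B" using card_le_Suc_iff[of "Suc (Suc 0)" T] by blast
  then obtain b C where C: "B = insert b C" "b \<notin> C" "Suc 0 \<le> card C" using card_le_Suc_iff[of "Suc 0" B] by blast
  then obtain c D where D: "C = insert c D" "c \<notin> D" using card_le_Suc_iff[of 0 C] by blast
  have m: "a \<in> T" "b \<in> T" "c \<in> T" "a \<noteq> b" "a \<noteq> c" "b \<noteq> c" using B C D by auto
  have "vge a 0" "vge b 0" "vge c 0" using m T(2) by auto
  moreover have "\<not> vge (a - b) 1" "\<not> vge (a - c) 1" "\<not> vge (b - c) 1"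
    using m T(4) by blast+
  ultimately show ?thesis by blast
qed

lemma reps4: assumes "resq v \<ge> 4"
  shows "\<exists>a b c d. vge a 0 \<and> vge b 0 \<and> vge c 0 \<and> vge d 0 \<and> \<not> vge (a - b) 1 \<and> \<not> vge (a - c) 1 \<and> \<not> vge (b - c) 1
      \<and> \<not> vge (a - d) 1 \<and> \<not> vge (b - d) 1 \<and> \<not> vge (c - d) 1"
proof -
  obtain T where T: "finite T" "T \<subseteq> {x. vge x 0}" "card T = resq v"
    "\<forall>x\<in>T. \<forall>y\<in>T. x \<noteq> y \<longrightarrow> \<not> vge (x - y) 1" using res_reps by blast
  then have "Suc (Suc (Suc (Suc 0))) \<le> card T" using assms by simp
  then obtain a B where B: "T = insert a B" "a \<notin> B" "Suc (Suc (Suc 0)) \<le> card B" using card_le_Suc_iff[of "Suc (Suc (Suc 0))" T] by blast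
  then obtain b C where C: "B = insert b C" "b \<notin> C" "Suc (Suc 0) \<le> card C" using card_le_Suc_iff[of "Suc (Suc 0)" B] by blast
  then obtain c D where D: "C = insert c D" "c \<notin> D" "Suc 0 \<le> card D" using card_le_Suc_iff[of "Suc 0" C] by blast
  then obtain d E where E: "D = insert d E" "d \<notin> E" using card_le_Suc_iff[of 0 D] by blast
  have m: "a \<in> T" "b \<in> T" "c \<in> T" "d \<in> T" "a \<noteq> b" "a \<noteq> c" "b \<noteq> c" "a \<noteq> d" "b \<noteq> d" "c \<noteq> d"
    using B C D E by auto
  have "vge a 0" "vge b 0" "vge c 0" "vge d 0" using m T(2) by auto
  moreover have "\<not> vge (a - b) 1" "\<not> vge (a - c) 1" "\<not> vge (b - c) 1"
     "\<not> vge (a - d) 1" "\<not> vge (b - d) 1" "\<not> vge (c - d) 1"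
    using m T(4) by blast+
  ultimately show ?thesis by blast
qed

end

context LF begin

lemma vge_pipow_mult: "vge (z * \<pi> ^ j) n \<longleftrightarrow> vge z (n - int j)"
  using vge_pi[of z "int j" n] by (simp add: power_int_of_nat)

lemma pipow0: "\<pi> ^ j \<noteq> 0" using pi0 by simp

lemma pt_U: assumes "j > 0" "vge a 0" shows "1 + a * \<pi> ^ j \<in> U j"
proof -
  have "vge (a * \<pi> ^ j) (int j)" using assms vge_pipow_mult by simp
  then show ?thesis using U_pos[OF assms(1)] by simp
qed

lemma U_cong_iff: assumes "x \<in> U j" "y \<in> U j"
  shows "x / y \<in> U (Suc j) \<longleftrightarrow> vge (x - y) (int (Suc j))"
proof -
  have y: "y \<noteq> 0" "v y = 0" using U_unit[OF assms(2)] by auto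
  have "x / y - 1 = (x - y) / y" using y by (simp add: field_simps)
  then show ?thesis using U_Suc vge_div_unit[OF y(2) y(1)] by simp
qed

lemma pt_incong: assumes "j > 0" "vge a 0" "vge b 0" "\<not> vge (a - b) 1"
  shows "(1 + a * \<pi> ^ j) / (1 + b * \<pi> ^ j) \<notin> U (Suc j)"
proof
  assume h: "(1 + a * \<pi> ^ j) / (1 + b * \<pi> ^ j) \<in> U (Suc j)"
  have "vge ((1 + a * \<pi> ^ j) - (1 + b * \<pi> ^ j)) (int (Suc j))"
    using h U_cong_iff pt_U assms by blast
  moreover have "(1 + a * \<pi> ^ j) - (1 + b * \<pi> ^ j) = (a - b) * \<pi> ^ j" by (simp add: algebra_simps)
  ultimately have "vge (a - b) 1" using vge_pipow_mult by simp
  then show False using assms by simp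
qed

lemma cong_pigeon: assumes "j > 0" "T \<subseteq> U j"
  and nc: "\<And>x y. x \<in> T \<Longrightarrow> y \<in> T \<Longrightarrow> x \<noteq> y \<Longrightarrow> x / y \<notin> U (Suc j)"
  shows "card T \<le> resq v"
proof -
  define f where "f x = (x - 1) / \<pi> ^ j" for x
  have inj: "inj_on f T" unfolding f_def using pi0 by (intro inj_onI) (auto simp: divide_cancel_right)
  have fx: "f x * \<pi> ^ j = x - 1" for x unfolding f_def using pipow0 by simp
  have "card (f ` T) \<le> resq v"
  proof (rule res_card_le)
    show "f ` T \<subseteq> {x. vge x 0}"
    proof
      fix z assume "z \<in> f ` T"
      then obtain x where x: "x \<in> T" "z = f x" by blast
      then have "vge (f x * \<pi> ^ j) (int j)" using fx assms U_pos by auto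
      then show "z \<in> {x. vge x 0}" using x vge_pipow_mult by simp
    qed
    fix z w assume zw: "z \<in> f ` T" "w \<in> f ` T" "z \<noteq> w"
    then obtain x y where xy: "x \<in> T" "y \<in> T" "z = f x" "w = f y" by blast
    then have "x \<noteq> y" using zw by auto
    show "\<not> vge (z - w) 1"
    proof
      assume "vge (z - w) 1"
      then have "vge ((z - w) * \<pi> ^ j) (int (Suc j))" using vge_pipow_mult by simp
      moreover have "(z - w) * \<pi> ^ j = x - y" using xy fx[of x] fx[of y] by (simp add: left_diff_distrib)
      ultimately have "x / y \<in> U (Suc j)" using U_cong_iff xy assms by auto
      then show False using nc xy \<open>x \<noteq> y\<close> by blast
    qed
  qed
  then show ?thesis using card_image[OF inj] by simp
qed

lemma q2_U0: assumes "resq v = 2" "x \<in> U 0" shows "x \<in> U 1"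
proof (rule ccontr)
  assume nx: "x \<notin> U 1"
  have x: "x \<noteq> 0" "v x = 0" using U_unit[OF assms(2)] by auto
  have x1: "\<not> vge (x - 1) 1" using nx U_pos[of 1 x] by simp
  have x1': "\<not> vge (1 - x) 1" using x1 cong_sym by blast
  have "x \<noteq> 1" using nx by auto
  have "card {0, 1, x} \<le> resq v"
  proof (rule res_card_le)
    show "{0, 1, x} \<subseteq> {x. vge x 0}" using x by (auto simp: vge_def)
    fix a b assume "a \<in> {0, 1, x}" "b \<in> {0, 1, x}" "a \<noteq> b"
    then show "\<not> vge (a - b) 1" using x x1 x1' by (auto simp: vge_def vneg)
  qed
  moreover have "card {0, 1, x} = 3" using x \<open>x \<noteq> 1\<close> by simp
  ultimately show False using assms by simp
qed

lemma U0_ex: assumes "resq v \<ge> 3" shows "\<exists>g\<in>U 0. g \<notin> U 1"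
proof -
  obtain a b c where abc: "vge a 0" "vge b 0" "vge c 0" "\<not> vge (a - b) 1" "\<not> vge (a - c) 1" "\<not> vge (b - c) 1"
    using reps3[OF assms] by blast
  have good: "g \<in> U 0 \<and> g \<notin> U 1" if "vge g 0" "\<not> vge g 1" "\<not> vge (g - 1) 1" for g
  proof -
    have "g \<noteq> 0" using that by (auto simp: vge_def)
    then have "v g = 0" using that by (auto simp: vge_def)
    then show ?thesis using \<open>g \<noteq> 0\<close> that U_0 U_pos[of 1 g] by simp
  qed
  have t: "vge (x - y) 1" if "vge (x - 0) 1" "vge (y - 0) 1" for x y using that cong_trans cong_sym by blast
  have t1: "vge (x - y) 1" if "vge (x - 1) 1" "vge (y - 1) 1" for x y using that cong_trans cong_sym by blast
  have "(\<not> vge a 1 \<and> \<not> vge (a - 1) 1) \<or> (\<not> vge b 1 \<and> \<not> vge (b - 1) 1) \<or> (\<not> vge c 1 \<and> \<not> vge (c - 1) 1)"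
    using t[of a b] t[of a c] t[of b c] t1[of a b] t1[of a c] t1[of b c] abc by auto
  then show ?thesis using good abc by blast
qed

lemma Uj_ex: assumes "j > 0" shows "1 + \<pi> ^ j \<in> U j" "1 + \<pi> ^ j \<notin> U (Suc j)"
proof -
  show "1 + \<pi> ^ j \<in> U j" using pt_U[OF assms, of 1] by (simp add: vge_def)
  have "v (\<pi> ^ j) = int j" using vpow[OF pi0] vpi by simp
  then have "\<not> vge (\<pi> ^ j) (int (Suc j))" using pipow0 by (simp add: vge_def)
  then show "1 + \<pi> ^ j \<notin> U (Suc j)" using U_Suc by simp
qed

end

context LF begin

definition Hn :: "nat \<Rightarrow> 'a set" where
  "Hn n = {z. z \<noteq> 0 \<and> z / \<pi> powi (v z) \<in> U n}"

lemma pipowi0: "\<pi> powi m \<noteq> 0" using pi0 by simp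

lemma H_one: "1 \<in> Hn n" by (simp add: Hn_def)

lemma H_mult: assumes "x \<in> Hn n" "y \<in> Hn n" shows "x * y \<in> Hn n"
proof -
  have x: "x \<noteq> 0" and y: "y \<noteq> 0" using assms by (auto simp: Hn_def)
  have e: "x * y / \<pi> powi (v (x * y)) = (x / \<pi> powi v x) * (y / \<pi> powi v y)"
    using x y pi0 by (simp add: vmult power_int_add)
  have m: "(x / \<pi> powi v x) * (y / \<pi> powi v y) \<in> U n" using assms by (intro U_mult) (auto simp: Hn_def)
  have "x * y / \<pi> powi (v (x * y)) \<in> U n" using m by (simp only: e)
  then show ?thesis using x y by (simp add: Hn_def)
qed

lemma H_inv: assumes "x \<in> Hn n" shows "inverse x \<in> Hn n"
proof -
  have x: "x \<noteq> 0" using assms by (auto simp: Hn_def)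
  have e: "inverse x / \<pi> powi (v (inverse x)) = inverse (x / \<pi> powi v x)"
    unfolding vinv[OF x] using x pi0 by (simp add: power_int_minus field_simps)
  have m: "inverse (x / \<pi> powi v x) \<in> U n" using assms by (intro U_inv) (auto simp: Hn_def)
  have "inverse x / \<pi> powi (v (inverse x)) \<in> U n" using m by (simp only: e)
  then show ?thesis using x by (simp add: Hn_def)
qed

lemma H_U: "u \<in> U n \<Longrightarrow> u \<in> Hn n"
  using U_unit by (auto simp: Hn_def)

lemma H_pi: "\<pi> \<in> Hn n"
  using pi0 vpi by (simp add: Hn_def)

lemma H_notU: "g \<in> U 0 \<Longrightarrow> g \<notin> U n \<Longrightarrow> g \<notin> Hn n"
  using U_unit by (auto simp: Hn_def)

lemma step0: "\<exists>S. finite S \<and> S \<subseteq> U 0 \<and> (\<forall>w\<in>U 0. \<exists>s\<in>S. w * inverse s \<in> U (Suc 0))"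
proof -
  define rep where "rep C = (SOME r. r \<in> C \<and> r \<in> U 0)" for C :: "'a set"
  define S where "S = rep ` residue_field v \<inter> U 0"
  have "finite S" unfolding S_def using finres by simp
  moreover have "S \<subseteq> U 0" unfolding S_def by simp
  moreover have "\<forall>w\<in>U 0. \<exists>s\<in>S. w * inverse s \<in> U (Suc 0)"
  proof
    fix w assume w: "w \<in> U 0"
    have w0: "w \<noteq> 0" "v w = 0" using w U_0 by auto
    define C where "C = rr `` {w}"
    have C: "C \<in> residue_field v" unfolding C_def resf using w0 by (auto simp: vge_def)
    have "w \<in> C \<and> w \<in> U 0" unfolding C_def using w w0 by (auto simp: rr_iff vge_def)
    then have r: "rep C \<in> C \<and> rep C \<in> U 0" unfolding rep_def by (rule someI)
    then have rS: "rep C \<in> S" using C unfolding S_def by blast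
    have "vge (w - rep C) 1" using r unfolding C_def by (simp add: rr_iff)
    then have "w / rep C \<in> U (Suc 0)" using U_cong_iff[OF w, of "rep C"] r by simp
    then show "\<exists>s\<in>S. w * inverse s \<in> U (Suc 0)" using rS by (auto simp: divide_inverse)
  qed
  ultimately show ?thesis by blast
qed

lemma stepj: assumes "j > 0" shows "\<exists>S. finite S \<and> S \<subseteq> U j \<and> (\<forall>w\<in>U j. \<exists>s\<in>S. w * inverse s \<in> U (Suc j))"
proof -
  define rep where "rep C = (SOME r. r \<in> C)" for C :: "'a set"
  define S where "S = (\<lambda>C. 1 + rep C * \<pi> ^ j) ` residue_field v"
  have repC: "rep C \<in> C \<and> vge (rep C) 0" if Cin: "C \<in> residue_field v" for C
  proof -
    obtain a where a: "vge a 0" "C = rr `` {a}" using Cin unfolding resf by blast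
    then have "a \<in> C" by (auto simp: rr_iff vge_def)
    then have "rep C \<in> C" unfolding rep_def by (rule someI)
    then show ?thesis using a by (auto simp: rr_iff)
  qed
  have "finite S" unfolding S_def using finres by simp
  moreover have "S \<subseteq> U j" unfolding S_def using pt_U[OF assms] repC by auto
  moreover have "\<forall>w\<in>U j. \<exists>s\<in>S. w * inverse s \<in> U (Suc j)"
  proof
    fix w assume w: "w \<in> U j"
    define t where "t = (w - 1) / \<pi> ^ j"
    have tw: "t * \<pi> ^ j = w - 1" unfolding t_def using pipow0 by simp
    have "vge (w - 1) (int j)" using w U_pos assms by simp
    then have t0: "vge t 0" using tw vge_pipow_mult[of t j "int j"] by simp
    define C where "C = rr `` {t}"
    have C: "C \<in> residue_field v" unfolding C_def resf using t0 by auto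
    define r where "r = rep C"
    have r: "vge r 0" "vge (t - r) 1" using repC[OF C] unfolding r_def C_def by (auto simp: rr_iff)
    define s where "s = 1 + r * \<pi> ^ j"
    have sU: "s \<in> U j" unfolding s_def using pt_U[OF assms r(1)] .
    have sS: "s \<in> S" unfolding S_def s_def r_def using C by blast
    have "w - s = (t - r) * \<pi> ^ j" unfolding s_def using tw by (simp add: algebra_simps)
    moreover have "vge ((t - r) * \<pi> ^ j) (int (Suc j))" using r(2) vge_pipow_mult by simp
    ultimately have "w / s \<in> U (Suc j)" using U_cong_iff[OF w sU] by simp
    then show "\<exists>s\<in>S. w * inverse s \<in> U (Suc j)" using sS by (auto simp: divide_inverse)
  qed
  ultimately show ?thesis by blast
qed

lemma stepn: "\<exists>S. finite S \<and> S \<subseteq> U j \<and> (\<forall>w\<in>U j. \<exists>s\<in>S. w * inverse s \<in> U (Suc j))"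
  using step0 stepj by (cases "j = 0") auto

lemma units_fin: "\<exists>R. finite R \<and> R \<subseteq> U 0 \<and> (\<forall>u\<in>U 0. \<exists>r\<in>R. u * inverse r \<in> U n)"
proof (induction n)
  case 0
  show ?case by (intro exI[of _ "{1}"]) (auto simp: U_0 U_unit)
next
  case (Suc n)
  then obtain R where R: "finite R" "R \<subseteq> U 0" "\<forall>u\<in>U 0. \<exists>r\<in>R. u * inverse r \<in> U n" by blast
  obtain S where S: "finite S" "S \<subseteq> U n" "\<forall>w\<in>U n. \<exists>s\<in>S. w * inverse s \<in> U (Suc n)" using stepn[of n] by (elim exE conjE) simp
  define R' where "R' = (\<lambda>(r, s). r * s) ` (R \<times> S)"
  have "finite R'" unfolding R'_def using R S by simp
  moreover have "R' \<subseteq> U 0" unfolding R'_def using R S U_mono[of 0 n] by (auto intro!: U_mult)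
  moreover have "\<forall>u\<in>U 0. \<exists>r\<in>R'. u * inverse r \<in> U (Suc n)"
  proof
    fix u assume u: "u \<in> U 0"
    obtain r where r: "r \<in> R" "u * inverse r \<in> U n" using R u by blast
    obtain s where s: "s \<in> S" "u * inverse r * inverse s \<in> U (Suc n)" using S r by blast
    have "r * s \<in> R'" unfolding R'_def using r s by force
    moreover have "u * inverse (r * s) = u * inverse r * inverse s" by (simp add: field_simps)
    ultimately show "\<exists>r\<in>R'. u * inverse r \<in> U (Suc n)" using s by metis
  qed
  ultimately show ?case by blast
qed

lemma fin_idx: "\<exists>R. finite R \<and> 0 \<notin> R \<and> (\<forall>x. x \<noteq> 0 \<longrightarrow> (\<exists>r\<in>R. x * inverse r \<in> Hn n))"
proof -
  obtain R where R: "finite R" "R \<subseteq> U 0" "\<forall>u\<in>U 0. \<exists>r\<in>R. u * inverse r \<in> U n" using units_fin[of n] by (elim exE conjE) simp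
  have "0 \<notin> R" using R(2) U_0 by auto
  moreover have "\<exists>r\<in>R. x * inverse r \<in> Hn n" if x: "x \<noteq> 0" for x
  proof -
    define u where "u = x / \<pi> powi (v x)"
    have "u \<noteq> 0" "v u = 0" unfolding u_def using x pipowi0 by (auto simp: vdiv vpi_powi)
    then obtain r where r: "r \<in> R" "u * inverse r \<in> U n" using R U_0 by blast
    have r0: "r \<noteq> 0" "v r = 0" using r R U_unit by auto
    have vz: "v (x * inverse r) = v x" using x r0 by (simp add: vmult vinv)
    have "x * inverse r / \<pi> powi (v (x * inverse r)) = u * inverse r" unfolding vz u_def by simp
    then have "x * inverse r \<in> Hn n" using r x r0 by (simp add: Hn_def)
    then show ?thesis using r by blast
  qed
  ultimately show ?thesis using R by blast
qed

end

definition subgrp :: "'a::field set \<Rightarrow> bool" where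
  "subgrp K \<longleftrightarrow> 1 \<in> K \<and> 0 \<notin> K \<and> (\<forall>x\<in>K. \<forall>y\<in>K. x * y \<in> K) \<and> (\<forall>x\<in>K. inverse x \<in> K)"

definition homK :: "'a::field set \<Rightarrow> ('a \<Rightarrow> complex) \<Rightarrow> bool" where
  "homK K f \<longleftrightarrow> (\<forall>x\<in>K. \<forall>y\<in>K. f (x * y) = f x * f y) \<and> (\<forall>x\<in>K. f x \<noteq> 0)"

definition tors :: "'a::field set \<Rightarrow> bool" where
  "tors K \<longleftrightarrow> (\<forall>x. x \<noteq> 0 \<longrightarrow> (\<exists>d>0. x ^ d \<in> K))"

lemma subgrp_pow: "subgrp K \<Longrightarrow> x \<in> K \<Longrightarrow> x ^ n \<in> K"
  by (induction n) (auto simp: subgrp_def)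

lemma homK_1: assumes "subgrp K" "homK K f" shows "f 1 = 1"
proof -
  have "f (1 * 1) = f 1 * f 1" "f 1 \<noteq> 0" using assms unfolding subgrp_def homK_def by blast+
  then show ?thesis by simp
qed

lemma homK_pow: assumes "subgrp K" "homK K f" "x \<in> K" shows "f (x ^ n) = f x ^ n"
proof (induction n)
  case 0 then show ?case using homK_1[OF assms(1,2)] by simp
next
  case (Suc n)
  have "f (x * x ^ n) = f x * f (x ^ n)" using assms subgrp_pow[OF assms(1,3)] unfolding homK_def by blast
  then show ?case using Suc by simp
qed

lemma ex_root: assumes "(c::complex) \<noteq> 0" "n > 0" shows "\<exists>z. z ^ n = c"
proof -
  have "card {z::complex. z ^ n = c} = n" using card_nth_roots[OF assms] .
  then have "{z::complex. z ^ n = c} \<noteq> {}" using assms by (metis card.empty less_numeral_extra(3))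
  then show ?thesis by blast
qed

lemma ex_root1: assumes "n > 1" shows "\<exists>z::complex. z ^ n = 1 \<and> z \<noteq> 1"
proof (rule ccontr)
  assume "\<not> ?thesis"
  then have "{z::complex. z ^ n = 1} \<subseteq> {1}" by auto
  then have "card {z::complex. z ^ n = 1} \<le> card {1::complex}" by (rule card_mono[rotated]) simp
  moreover have "card {z::complex. z ^ n = 1} = n" using card_roots_unity_eq assms by simp
  ultimately show False using assms by simp
qed

lemma ext_step:
  fixes K :: "'a::field set" and f :: "'a \<Rightarrow> complex"
  assumes K: "subgrp K" and f: "homK K f" and x0: "x \<noteq> 0"
    and dd: "x ^ d0 \<in> K" "d0 > 0"
    and d_def: "d = (LEAST d. d > 0 \<and> x ^ d \<in> K)" and c: "c ^ d = f (x ^ d)"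
  shows "\<exists>K' f'. subgrp K' \<and> homK K' f' \<and> K \<subseteq> K' \<and> x \<in> K' \<and> (\<forall>y\<in>K. f' y = f y) \<and> (x \<notin> K \<longrightarrow> f' x = c)"
proof -
  have Kmul: "a \<in> K \<Longrightarrow> b \<in> K \<Longrightarrow> a * b \<in> K" for a b using K by (simp add: subgrp_def)
  have Kinv: "a \<in> K \<Longrightarrow> inverse a \<in> K" for a using K by (simp add: subgrp_def)
  have K1: "1 \<in> K" and K0: "0 \<notin> K" using K by (auto simp: subgrp_def)
  have fmul: "a \<in> K \<Longrightarrow> b \<in> K \<Longrightarrow> f (a * b) = f a * f b" for a b using f by (simp add: homK_def)
  have fnz: "a \<in> K \<Longrightarrow> f a \<noteq> 0" for a using f by (simp add: homK_def)
  have f1: "f 1 = 1" using homK_1[OF K f] .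
  have dpos: "d > 0" and xd: "x ^ d \<in> K"
    using LeastI[of "\<lambda>d. d > 0 \<and> x ^ d \<in> K" d0] dd unfolding d_def by auto
  have dmin: "\<not> x ^ m \<in> K" if "0 < m" "m < d" for m
    using not_less_Least[of m "\<lambda>d. d > 0 \<and> x ^ d \<in> K"] that unfolding d_def by auto
  have c0: "c \<noteq> 0" using c fnz[OF xd] dpos by (metis power_0_left not_gr0)
  define K' where "K' = {z. z \<noteq> 0 \<and> (\<exists>m. z * inverse (x ^ m) \<in> K)}"
  define e where "e z = (LEAST m. z * inverse (x ^ m) \<in> K)" for z
  define f' where "f' z = c ^ e z * f (z * inverse (x ^ e z))" for z
  have red: "z * inverse (x ^ (m mod d)) \<in> K" if "z * inverse (x ^ m) \<in> K" for z m
  proof -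
    have "x ^ m = x ^ (m mod d) * (x ^ d) ^ (m div d)"
      by (metis mod_div_mult_eq power_add power_mult mult.commute)
    then have e: "z * inverse (x ^ (m mod d)) = z * inverse (x ^ m) * (x ^ d) ^ (m div d)"
      using x0 by (simp add: field_simps)
    show ?thesis unfolding e by (rule Kmul[OF that subgrp_pow[OF K xd]])
  qed
  have uniq: "m = m'" if "z * inverse (x ^ m) \<in> K" "z * inverse (x ^ m') \<in> K" "m < d" "m' < d" for z m m'
  proof (rule ccontr)
    assume ne: "m \<noteq> m'"
    have z0: "z \<noteq> 0" using that K0 by auto
    have gen: "False" if a: "z * inverse (x ^ a) \<in> K" "z * inverse (x ^ b) \<in> K" "a < b" "b < d" for a b
    proof -
      have "x ^ b = x ^ a * x ^ (b - a)" using a(3) by (simp add: power_add[symmetric])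
      then have e: "x ^ (b - a) = (z * inverse (x ^ a)) * inverse (z * inverse (x ^ b))"
        using x0 z0 by (simp add: field_simps)
      have "x ^ (b - a) \<in> K" unfolding e by (rule Kmul[OF a(1) Kinv[OF a(2)]])
      then show False using dmin[of "b - a"] a by simp
    qed
    show False using ne that gen[of m m'] gen[of m' m] by (cases "m < m'") auto
  qed
  have eK: "e z < d \<and> z * inverse (x ^ e z) \<in> K" if zK: "z \<in> K'" for z
  proof -
    obtain m where m: "z * inverse (x ^ m) \<in> K" using zK unfolding K'_def by blast
    have "z * inverse (x ^ e z) \<in> K" unfolding e_def using m by (rule LeastI)
    moreover have "e z \<le> m mod d" unfolding e_def using red[OF m] by (rule Least_le)
    moreover have "m mod d < d" using dpos by simp
    ultimately show ?thesis by simp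
  qed
  have eq: "e z = m" if "z \<in> K'" "z * inverse (x ^ m) \<in> K" "m < d" for z m
    using uniq[of z "e z" m] eK[OF that(1)] that by blast
  have inK': "z \<in> K'" if "z \<noteq> 0" "z * inverse (x ^ m) \<in> K" for z m
    using that unfolding K'_def by blast
  have sub: "subgrp K'"
    unfolding subgrp_def
  proof (intro conjI ballI)
    show "1 \<in> K'" using K1 by (intro inK'[of 1 0]) auto
    show "0 \<notin> K'" unfolding K'_def by simp
  next
    fix a b assume ab: "a \<in> K'" "b \<in> K'"
    obtain m1 where m1: "a * inverse (x ^ m1) \<in> K" "a \<noteq> 0" using ab unfolding K'_def by blast
    obtain m2 where m2: "b * inverse (x ^ m2) \<in> K" "b \<noteq> 0" using ab unfolding K'_def by blast
    have e: "a * b * inverse (x ^ (m1 + m2)) = (a * inverse (x ^ m1)) * (b * inverse (x ^ m2))"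
      by (simp add: power_add field_simps)
    have "a * b * inverse (x ^ (m1 + m2)) \<in> K" unfolding e by (rule Kmul[OF m1(1) m2(1)])
    then show "a * b \<in> K'" using m1 m2 by (intro inK') auto
  next
    fix a assume a: "a \<in> K'"
    obtain m where m: "a * inverse (x ^ m) \<in> K" "a \<noteq> 0" using a unfolding K'_def by blast
    have "x ^ (m * d) = x ^ (m * (d - 1)) * x ^ m"
      using dpos by (simp add: power_add[symmetric] algebra_simps)
    moreover have "x ^ (m * d) = (x ^ d) ^ m" by (simp add: power_mult mult.commute)
    ultimately have e: "inverse a * inverse (x ^ (m * (d - 1))) = inverse (a * inverse (x ^ m)) * inverse ((x ^ d) ^ m)"
      using x0 m by (simp add: field_simps)
    moreover have "inverse (a * inverse (x ^ m)) * inverse ((x ^ d) ^ m) \<in> K"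
      by (rule Kmul[OF Kinv[OF m(1)] Kinv[OF subgrp_pow[OF K xd]]])
    ultimately have "inverse a * inverse (x ^ (m * (d - 1))) \<in> K" unfolding e by blast
    then show "inverse a \<in> K'" using m by (intro inK'[of _ "m * (d - 1)"]) auto
  qed
  have hom: "homK K' f'"
    unfolding homK_def
  proof (intro conjI ballI)
    fix z assume z: "z \<in> K'"
    show "f' z \<noteq> 0" unfolding f'_def using c0 fnz eK[OF z] by simp
  next
    fix z1 z2 assume z: "z1 \<in> K'" "z2 \<in> K'"
    define m1 where "m1 = e z1"
    define m2 where "m2 = e z2"
    define y1 where "y1 = z1 * inverse (x ^ m1)"
    define y2 where "y2 = z2 * inverse (x ^ m2)"
    have y: "y1 \<in> K" "y2 \<in> K" "m1 < d" "m2 < d" using eK z unfolding y1_def y2_def m1_def m2_def by auto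
    have fz: "f' z1 = c ^ m1 * f y1" "f' z2 = c ^ m2 * f y2"
      unfolding f'_def y1_def y2_def m1_def m2_def by simp_all
    have zz: "z1 * z2 \<in> K'" using sub z unfolding subgrp_def by blast
    show "f' (z1 * z2) = f' z1 * f' z2"
    proof (cases "m1 + m2 < d")
      case True
      have e: "z1 * z2 * inverse (x ^ (m1 + m2)) = y1 * y2"
        unfolding y1_def y2_def by (simp add: power_add field_simps)
      have yy: "z1 * z2 * inverse (x ^ (m1 + m2)) \<in> K" unfolding e by (rule Kmul[OF y(1,2)])
      have "e (z1 * z2) = m1 + m2" using eq[OF zz yy True] .
      then have "f' (z1 * z2) = c ^ (m1 + m2) * f (y1 * y2)"
        unfolding f'_def using e by simp
      then show ?thesis using fz fmul[OF y(1,2)] by (simp add: power_add)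
    next
      case False
      define m where "m = m1 + m2 - d"
      have md: "m < d" "m + d = m1 + m2" unfolding m_def using False y by auto
      have "x ^ (m1 + m2) = x ^ m * x ^ d" using md by (simp add: power_add[symmetric])
      then have eqn: "z1 * z2 * inverse (x ^ m) = y1 * y2 * x ^ d"
        unfolding y1_def y2_def using x0 by (simp add: power_add field_simps)
      have yy: "z1 * z2 * inverse (x ^ m) \<in> K" unfolding eqn by (rule Kmul[OF Kmul[OF y(1,2)] xd])
      have "e (z1 * z2) = m" using eq[OF zz yy md(1)] .
      then have "f' (z1 * z2) = c ^ m * f (y1 * y2 * x ^ d)"
        unfolding f'_def using eqn by simp
      also have "\<dots> = c ^ m * (f y1 * f y2 * f (x ^ d))" using fmul y Kmul xd by simp
      also have "\<dots> = c ^ (m + d) * f y1 * f y2" using c by (simp add: power_add)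
      finally show ?thesis using fz md by (simp add: power_add)
    qed
  qed
  have KK: "K \<subseteq> K'" using K0 by (auto intro: inK'[of _ 0])
  have xK: "x \<in> K'" using x0 K1 by (intro inK'[of _ 1]) auto
  have agree: "\<forall>y\<in>K. f' y = f y"
  proof
    fix y assume y: "y \<in> K"
    have "e y = 0" using eq[of y 0] KK y dpos by auto
    then show "f' y = f y" unfolding f'_def by simp
  qed
  have fx: "f' x = c" if "x \<notin> K"
  proof -
    have "d \<noteq> 1" using xd that by auto
    then have "1 < d" using dpos by simp
    then have "e x = 1" using eq[of x 1] xK x0 K1 by simp
    then show ?thesis unfolding f'_def using x0 f1 by simp
  qed
  show ?thesis using sub hom KK xK agree fx by blast
qed

lemma tors_mono: "tors K \<Longrightarrow> K \<subseteq> K' \<Longrightarrow> tors K'"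
  unfolding tors_def by blast

lemma ext_one:
  fixes K :: "'a::field set"
  assumes K: "subgrp K" and f: "homK K f" and t: "tors K" and x0: "x \<noteq> 0"
  shows "\<exists>K' f'. subgrp K' \<and> homK K' f' \<and> K \<subseteq> K' \<and> x \<in> K' \<and> (\<forall>y\<in>K. f' y = f y)"
proof -
  obtain d0 where dd: "d0 > 0" "x ^ d0 \<in> K" using t x0 unfolding tors_def by blast
  define d where "d = (LEAST d. d > 0 \<and> x ^ d \<in> K)"
  have "d > 0 \<and> x ^ d \<in> K" using LeastI[of "\<lambda>d. d > 0 \<and> x ^ d \<in> K" d0] dd unfolding d_def by auto
  then have "f (x ^ d) \<noteq> 0" "d > 0" using f unfolding homK_def by auto
  then obtain c where "c ^ d = f (x ^ d)" using ex_root by blast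
  from ext_step[OF K f x0 dd(2) dd(1) d_def this] show ?thesis by blast
qed

lemma ext_fin:
  fixes K :: "'a::field set"
  assumes "finite R"
  shows "subgrp K \<Longrightarrow> homK K f \<Longrightarrow> tors K \<Longrightarrow> 0 \<notin> R \<Longrightarrow>
     \<exists>K' f'. subgrp K' \<and> homK K' f' \<and> K \<subseteq> K' \<and> R \<subseteq> K' \<and> (\<forall>y\<in>K. f' y = f y)"
  using assms
proof (induction R rule: finite_induct)
  case empty
  then show ?case by blast
next
  case (insert x R)
  then obtain K1 f1 where K1: "subgrp K1" "homK K1 f1" "K \<subseteq> K1" "R \<subseteq> K1" "\<forall>y\<in>K. f1 y = f y" by auto
  have "tors K1" using tors_mono insert K1 by blast
  moreover have "x \<noteq> 0" using insert by auto
  ultimately obtain K2 f2 where K2: "subgrp K2" "homK K2 f2" "K1 \<subseteq> K2" "x \<in> K2" "\<forall>y\<in>K1. f2 y = f1 y"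
    using ext_one K1 by blast
  show ?case
    using K1 K2 by (intro exI[of _ K2] exI[of _ f2]) auto
qed

lemma tors_of_idx:
  fixes H :: "'a::field set"
  assumes H: "subgrp H" and R: "finite R" and idx: "\<forall>x. x \<noteq> 0 \<longrightarrow> (\<exists>r\<in>R. x * inverse r \<in> H)"
  shows "tors H"
  unfolding tors_def
proof (intro allI impI)
  fix x :: 'a assume x0: "x \<noteq> 0"
  define \<rho> where "\<rho> i = (SOME r. r \<in> R \<and> x ^ i * inverse r \<in> H)" for i
  have \<rho>: "\<rho> i \<in> R \<and> x ^ i * inverse (\<rho> i) \<in> H" for i
  proof -
    have "x ^ i \<noteq> 0" using x0 by simp
    then have "\<exists>r. r \<in> R \<and> x ^ i * inverse r \<in> H" using idx by blast
    then show ?thesis unfolding \<rho>_def by (rule someI_ex)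
  qed
  have "\<not> inj_on \<rho> {..card R}"
  proof
    assume "inj_on \<rho> {..card R}"
    moreover have "\<rho> ` {..card R} \<subseteq> R" using \<rho> by auto
    ultimately have "card {..card R} \<le> card R" using R by (metis card_inj_on_le)
    then show False by simp
  qed
  then obtain i j where ij: "i \<le> card R" "j \<le> card R" "i \<noteq> j" "\<rho> i = \<rho> j"
    unfolding inj_on_def by auto
  have gen: "\<exists>d>0. x ^ d \<in> H" if "a < b" "\<rho> a = \<rho> b" for a b
  proof -
    define r where "r = \<rho> a"
    have h: "x ^ a * inverse r \<in> H" "x ^ b * inverse r \<in> H" using \<rho>[of a] \<rho>[of b] that unfolding r_def by auto
    have r0: "r \<noteq> 0" using h H x0 unfolding subgrp_def by (metis mult_zero_right inverse_zero power_eq_0_iff)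
    have "x ^ b = x ^ a * x ^ (b - a)" using that by (simp add: power_add[symmetric])
    then have e: "x ^ (b - a) = (x ^ b * inverse r) * inverse (x ^ a * inverse r)"
      using x0 r0 by (simp add: field_simps)
    have "x ^ (b - a) \<in> H" unfolding e using h H unfolding subgrp_def by blast
    then show ?thesis using that by (intro exI[of _ "b - a"]) auto
  qed
  show "\<exists>d>0. x ^ d \<in> H" using ij gen[of i j] gen[of j i] by (cases "i < j") auto
qed

lemma separate:
  fixes H :: "'a::field set"
  assumes H: "subgrp H" and R: "finite R" "0 \<notin> R" and idx: "\<forall>x. x \<noteq> 0 \<longrightarrow> (\<exists>r\<in>R. x * inverse r \<in> H)"
    and g: "g \<noteq> 0" "g \<notin> H"
  shows "\<exists>\<chi>::'a \<Rightarrow> complex. (\<forall>x y. x \<noteq> 0 \<longrightarrow> y \<noteq> 0 \<longrightarrow> \<chi> (x * y) = \<chi> x * \<chi> y) \<and> (\<forall>x. x \<noteq> 0 \<longrightarrow> \<chi> x \<noteq> 0)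
     \<and> (\<forall>h\<in>H. \<chi> h = 1) \<and> \<chi> g \<noteq> 1"
proof -
  have t: "tors H" using tors_of_idx[OF H R(1) idx] .
  have f0: "homK H (\<lambda>_. 1)" by (simp add: homK_def)
  obtain d0 where dd: "d0 > 0" "g ^ d0 \<in> H" using t g unfolding tors_def by blast
  define d where "d = (LEAST d. d > 0 \<and> g ^ d \<in> H)"
  have "d > 0 \<and> g ^ d \<in> H" using LeastI[of "\<lambda>d. d > 0 \<and> g ^ d \<in> H" d0] dd unfolding d_def by auto
  moreover have "d \<noteq> 1" using calculation g by auto
  ultimately have "d > 1" by simp
  then obtain c :: complex where c: "c ^ d = 1" "c \<noteq> 1" using ex_root1 by blast
  obtain K1 f1 where K1: "subgrp K1" "homK K1 f1" "H \<subseteq> K1" "g \<in> K1" "\<forall>y\<in>H. f1 y = 1" "f1 g = c"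
    using ext_step[OF H f0 g(1) dd(2) dd(1) d_def, of c] c g by auto
  obtain K2 f2 where K2: "subgrp K2" "homK K2 f2" "K1 \<subseteq> K2" "R \<subseteq> K2" "\<forall>y\<in>K1. f2 y = f1 y"
    using ext_fin[OF R(1) K1(1) K1(2) tors_mono[OF t K1(3)] R(2)] by blast
  have all: "x \<in> K2" if x0: "x \<noteq> 0" for x
  proof -
    obtain r where r: "r \<in> R" "x * inverse r \<in> H" using idx x0 by blast
    have "x = (x * inverse r) * r" using r R(2) by (metis mult.assoc mult.right_neutral left_inverse)
    moreover have "(x * inverse r) * r \<in> K2" using K2 K1 r unfolding subgrp_def by blast
    ultimately show ?thesis by metis
  qed
  have "\<forall>x y. x \<noteq> 0 \<longrightarrow> y \<noteq> 0 \<longrightarrow> f2 (x * y) = f2 x * f2 y"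
    using all K2(2) unfolding homK_def by blast
  moreover have "\<forall>x. x \<noteq> 0 \<longrightarrow> f2 x \<noteq> 0" using all K2(2) unfolding homK_def by blast
  moreover have "\<forall>h\<in>H. f2 h = 1" using K1 K2 by auto
  moreover have "f2 g \<noteq> 1" using K1(4,6) K2(5) c(2) by simp
  ultimately show ?thesis by (intro exI[of _ f2]) simp
qed

lemma card_inj_roots:
  fixes f :: "'x \<Rightarrow> complex"
  assumes "inj_on f X" "\<forall>x\<in>X. f x ^ n = 1" "n > 0"
  shows "card X \<le> n"
proof -
  have "card (f ` X) \<le> card {z::complex. z ^ n = 1}"
    using assms by (intro card_mono) (auto intro: finite_roots_unity)
  then show ?thesis using card_image[OF assms(1)] card_roots_unity_eq[OF assms(3)] by simp
qed

lemma comb: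
  fixes P :: "('x \<Rightarrow> complex) set"
  assumes closed: "\<And>f g. f \<in> P \<Longrightarrow> g \<in> P \<Longrightarrow> (\<lambda>x. f x * g x) \<in> P"
  and nz: "\<And>f x. f \<in> P \<Longrightarrow> x \<in> V \<Longrightarrow> f x \<noteq> 0"
  and cls: "\<And>f. f \<in> P \<Longrightarrow> (\<forall>x\<in>V. f x = 1) \<or> (\<forall>x\<in>V. f x = e1 x) \<or> (\<forall>x\<in>V. f x = e2 x)"
  and sep: "\<And>x y. x \<in> X \<Longrightarrow> y \<in> X \<Longrightarrow> x \<noteq> y \<Longrightarrow> \<exists>f\<in>P. f x \<noteq> f y"
  and XV: "X \<subseteq> V"
  and size: "card X \<ge> 4 \<or> (card X \<ge> 3 \<and> (\<forall>x\<in>V. e1 x = e2 x))"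
  shows False
proof (cases "\<exists>f\<in>P. \<exists>y\<in>V. f y \<noteq> 1 \<and> f y * f y \<noteq> 1")
  case True
  then obtain f y where f: "f \<in> P" "y \<in> V" "f y \<noteq> 1" "f y * f y \<noteq> 1" by blast
  define f2 where "f2 = (\<lambda>x. f x * f x)"
  have f2P: "f2 \<in> P" unfolding f2_def using closed f by blast
  have fy0: "f y \<noteq> 0" using nz f by blast
  have ne: "f y * f y \<noteq> f y" using f(3) fy0 by simp
  have A: "((\<forall>x\<in>V. f x = e1 x) \<and> (\<forall>x\<in>V. f2 x = e2 x)) \<or> ((\<forall>x\<in>V. f x = e2 x) \<and> (\<forall>x\<in>V. f2 x = e1 x))"
    and diff: "\<not> (\<forall>x\<in>V. e1 x = e2 x)"
  proof -
    have c1: "(\<forall>x\<in>V. f x = e1 x) \<or> (\<forall>x\<in>V. f x = e2 x)" using cls[OF f(1)] f(2,3) by blast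
    have c2: "(\<forall>x\<in>V. f2 x = e1 x) \<or> (\<forall>x\<in>V. f2 x = e2 x)" using cls[OF f2P] f(2,4) unfolding f2_def by blast
    have n1: "\<not> ((\<forall>x\<in>V. f x = e1 x) \<and> (\<forall>x\<in>V. f2 x = e1 x))" using f(2) ne unfolding f2_def by metis
    have n2: "\<not> ((\<forall>x\<in>V. f x = e2 x) \<and> (\<forall>x\<in>V. f2 x = e2 x))" using f(2) ne unfolding f2_def by metis
    show "((\<forall>x\<in>V. f x = e1 x) \<and> (\<forall>x\<in>V. f2 x = e2 x)) \<or> ((\<forall>x\<in>V. f x = e2 x) \<and> (\<forall>x\<in>V. f2 x = e1 x))"
      using c1 c2 n1 n2 by blast
    show "\<not> (\<forall>x\<in>V. e1 x = e2 x)"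
    proof
      assume "\<forall>x\<in>V. e1 x = e2 x"
      then show False using c1 c2 n1 n2 by auto
    qed
  qed
  have cls': "(\<forall>x\<in>V. g x = 1) \<or> (\<forall>x\<in>V. g x = f x) \<or> (\<forall>x\<in>V. g x = f x * f x)" if "g \<in> P" for g
    using cls[OF that] A unfolding f2_def by auto
  define f3 where "f3 = (\<lambda>x. f2 x * f x)"
  have f3P: "f3 \<in> P" unfolding f3_def using closed f f2P by blast
  have cube: "\<forall>x\<in>V. f x ^ 3 = 1"
  proof -
    have "\<not> (\<forall>x\<in>V. f3 x = f x)"
    proof
      assume "\<forall>x\<in>V. f3 x = f x"
      then have "f y * f y * f y = f y" using f(2) unfolding f3_def f2_def by auto
      then have "(f y * f y) * f y = 1 * f y" by simp
      then have "f y * f y = 1" using mult_right_cancel[OF fy0] by blast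
      then show False using f by simp
    qed
    moreover have "\<not> (\<forall>x\<in>V. f3 x = f x * f x)"
    proof
      assume "\<forall>x\<in>V. f3 x = f x * f x"
      then have "f y * f y * f y = f y * f y" using f(2) unfolding f3_def f2_def by auto
      then have "f y * (f y * f y) = 1 * (f y * f y)" by (simp add: mult.assoc)
      moreover have "f y * f y \<noteq> 0" using fy0 by simp
      ultimately have "f y = 1" using mult_right_cancel by blast
      then show False using f by simp
    qed
    ultimately have "\<forall>x\<in>V. f3 x = 1" using cls'[OF f3P] by blast
    then show ?thesis unfolding f3_def f2_def by (simp add: power3_eq_cube)
  qed
  have inj: "inj_on f X"
  proof (rule inj_onI, rule ccontr)
    fix a b assume ab: "a \<in> X" "b \<in> X" "f a = f b" "a \<noteq> b"
    obtain g where g: "g \<in> P" "g a \<noteq> g b" using sep ab by blast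
    have abV: "a \<in> V" "b \<in> V" using ab XV by auto
    show False using cls'[OF g(1)] g(2) ab(3) abV by force
  qed
  have "\<forall>x\<in>X. f x ^ 3 = 1" using cube XV by auto
  then have "card X \<le> 3" using card_inj_roots[OF inj] by simp
  then show False using size diff by auto
next
  case False
  then have sq: "\<And>f y. f \<in> P \<Longrightarrow> y \<in> V \<Longrightarrow> f y * f y = 1" by (metis mult_1)
  have "card X \<ge> 2" using size by auto
  then obtain x1 x2 where x12: "x1 \<in> X" "x2 \<in> X" "x1 \<noteq> x2"
    by (metis One_nat_def card_le_Suc_iff numeral_2_eq_2 insertCI)
  obtain g0 where g0: "g0 \<in> P" "g0 x1 \<noteq> g0 x2" using sep x12 by blast
  have g0n: "\<not> (\<forall>x\<in>V. g0 x = 1)" using g0 x12 XV by (metis subsetD)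
  have cls': "(\<forall>x\<in>V. g x = 1) \<or> (\<forall>x\<in>V. g x = g0 x)" if g: "g \<in> P" for g
  proof (rule ccontr)
    assume "\<not> ?thesis"
    then obtain z1 z2 where z: "z1 \<in> V" "g z1 \<noteq> 1" "z2 \<in> V" "g z2 \<noteq> g0 z2" by auto
    define h where "h = (\<lambda>x. g x * g0 x)"
    have hP: "h \<in> P" unfolding h_def using closed g g0 by blast
    have cg: "(\<forall>x\<in>V. g x = e1 x) \<or> (\<forall>x\<in>V. g x = e2 x)" using cls[OF g] z by blast
    have cg0: "(\<forall>x\<in>V. g0 x = e1 x) \<or> (\<forall>x\<in>V. g0 x = e2 x)" using cls[OF g0(1)] g0n by blast
    have h1: "\<not> (\<forall>x\<in>V. h x = 1)"
    proof
      assume "\<forall>x\<in>V. h x = 1"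
      then have "g z2 * g0 z2 * g0 z2 = g0 z2" using z unfolding h_def by simp
      then have "g z2 = g0 z2" using sq[OF g0(1) z(3)] by (simp add: mult.assoc)
      then show False using z by simp
    qed
    have h2: "\<not> (\<forall>x\<in>V. h x = g0 x)"
    proof
      assume "\<forall>x\<in>V. h x = g0 x"
      then have "h z1 = g0 z1" using z(1) by blast
      then have "g z1 * g0 z1 = 1 * g0 z1" unfolding h_def by simp
      then show False using z mult_right_cancel[OF nz[OF g0(1) z(1)]] by blast
    qed
    have h3: "\<not> (\<forall>x\<in>V. h x = g x)"
    proof
      assume a: "\<forall>x\<in>V. h x = g x"
      have "\<forall>x\<in>V. g0 x = 1"
      proof
        fix x assume "x \<in> V"
        then have "g x * g0 x = g x" "g x \<noteq> 0" using a nz[OF g] unfolding h_def by auto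
        then show "g0 x = 1" by simp
      qed
      then show False using g0n by simp
    qed
    have "\<not> (\<forall>x\<in>V. g x = g0 x)" using z by auto
    then show False using cls[OF hP] cg cg0 h1 h2 h3 by auto
  qed
  have inj: "inj_on g0 X"
  proof (rule inj_onI, rule ccontr)
    fix a b assume ab: "a \<in> X" "b \<in> X" "g0 a = g0 b" "a \<noteq> b"
    obtain g where g: "g \<in> P" "g a \<noteq> g b" using sep ab by blast
    have abV: "a \<in> V" "b \<in> V" using ab XV by auto
    show False using cls'[OF g(1)] g(2) ab(3) abV by force
  qed
  have "\<forall>x\<in>X. g0 x ^ 2 = 1" using sq[OF g0(1)] XV by (auto simp: power2_eq_square)
  then have "card X \<le> 2" using card_inj_roots[OF inj] by simp
  then show False using size by auto
qed

context LF begin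

lemma sep_char: assumes "g \<in> U 0" "g \<notin> U n"
  shows "\<exists>\<mu>. is_char v \<mu> \<and> \<mu> \<pi> = 1 \<and> triv \<mu> n \<and> \<mu> g \<noteq> 1"
proof -
  have H: "subgrp (Hn n)" unfolding subgrp_def using H_one H_mult H_inv by (auto simp: Hn_def)
  obtain R where R: "finite R" "0 \<notin> R" "\<forall>x. x \<noteq> 0 \<longrightarrow> (\<exists>r\<in>R. x * inverse r \<in> Hn n)"
    using fin_idx[of n] by (elim exE conjE) simp
  have g: "g \<noteq> 0" "g \<notin> Hn n" using assms U_0 H_notU by auto
  obtain \<chi> :: "'a \<Rightarrow> complex" where \<chi>: "\<forall>x y. x \<noteq> 0 \<longrightarrow> y \<noteq> 0 \<longrightarrow> \<chi> (x * y) = \<chi> x * \<chi> y"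
    "\<forall>x. x \<noteq> 0 \<longrightarrow> \<chi> x \<noteq> 0" "\<forall>h\<in>Hn n. \<chi> h = 1" "\<chi> g \<noteq> 1"
    using separate[OF H R(1) R(2) R(3) g] by blast
  have mc: "mchar \<chi>" unfolding mchar_def using \<chi> by blast
  have tr: "triv \<chi> n" unfolding triv_def using \<chi>(3) H_U by blast
  have "is_char v \<chi>" using char_of[OF mc tr] .
  moreover have "\<chi> \<pi> = 1" using \<chi>(3) H_pi by blast
  ultimately show ?thesis using tr \<chi>(4) by blast
qed

lemma exact_char: assumes "g \<in> U i" "g \<notin> U (Suc i)"
  shows "\<exists>\<sigma>. is_char v \<sigma> \<and> \<sigma> \<pi> = 1 \<and> triv \<sigma> (Suc i) \<and> \<not> triv \<sigma> i"
proof -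
  have "g \<in> U 0" using assms U_mono[of 0 i] by simp
  then obtain \<sigma> where s: "is_char v \<sigma>" "\<sigma> \<pi> = 1" "triv \<sigma> (Suc i)" "\<sigma> g \<noteq> 1"
    using sep_char assms(2) by blast
  then have "\<not> triv \<sigma> i" using assms(1) unfolding triv_def by blast
  then show ?thesis using s by blast
qed

lemma triv_mul: "triv f n \<Longrightarrow> triv g m \<Longrightarrow> triv (\<lambda>x. f x * g x) (max n m)"
  unfolding triv_def using U_mono[of n "max n m"] U_mono[of m "max n m"] by auto

lemma triv_div: "triv f n \<Longrightarrow> triv g m \<Longrightarrow> triv (\<lambda>x. f x / g x) (max n m)"
  unfolding triv_def using U_mono[of n "max n m"] U_mono[of m "max n m"] by auto

lemma ex_triv_mul: "\<exists>n. triv f n \<Longrightarrow> \<exists>n. triv g n \<Longrightarrow> \<exists>n. triv (\<lambda>x. f x * g x) n"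
  using triv_mul by blast

lemma ex_triv_div: "\<exists>n. triv f n \<Longrightarrow> \<exists>n. triv g n \<Longrightarrow> \<exists>n. triv (\<lambda>x. f x / g x) n"
  using triv_div by blast

lemma mchar_mul: "mchar f \<Longrightarrow> mchar g \<Longrightarrow> mchar (\<lambda>x. f x * g x)"
  unfolding mchar_def by simp

lemma mchar_div: "mchar f \<Longrightarrow> mchar g \<Longrightarrow> mchar (\<lambda>x. f x / g x)"
  unfolding mchar_def by simp

lemma char_mul: "is_char v f \<Longrightarrow> is_char v g \<Longrightarrow> is_char v (\<lambda>x. f x * g x)"
  using char_iff mchar_mul ex_triv_mul by metis

lemma char_nz: "is_char v f \<Longrightarrow> x \<noteq> 0 \<Longrightarrow> f x \<noteq> 0"
  unfolding is_char_def by blast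

lemma twist:
  assumes s: "is_char v \<sigma>" "\<sigma> \<pi> = 1" and c: "is_char v \<chi>"
  defines "\<mu> \<equiv> \<lambda>x. \<sigma> x * \<chi> \<pi> powi v x / \<chi> x"
  shows "\<mu> \<in> charX v \<pi>" "\<And>x. x \<in> U 0 \<Longrightarrow> \<mu> x = \<sigma> x / \<chi> x"
proof -
  have c0: "\<chi> \<pi> \<noteq> 0" using char_nz[OF c pi0] .
  have ms: "mchar \<sigma>" and mc: "mchar \<chi>" using s c char_mchar by auto
  obtain n1 where n1: "triv \<sigma> n1" using char_triv[OF s(1)] by blast
  obtain n2 where n2: "triv \<chi> n2" using char_triv[OF c] by blast
  show u: "\<mu> x = \<sigma> x / \<chi> x" if "x \<in> U 0" for x
    using that U_0 unfolding \<mu>_def by simp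
  have "mchar \<mu>" unfolding mchar_def
  proof (intro conjI allI impI)
    fix x y :: 'a assume xy: "x \<noteq> 0" "y \<noteq> 0"
    have "\<chi> \<pi> powi v (x * y) = \<chi> \<pi> powi v x * \<chi> \<pi> powi v y"
      using xy c0 by (simp add: vmult power_int_add)
    then show "\<mu> (x * y) = \<mu> x * \<mu> y"
      unfolding \<mu>_def using ms mc xy unfolding mchar_def by simp
  next
    fix x :: 'a assume "x \<noteq> 0"
    then show "\<mu> x \<noteq> 0" unfolding \<mu>_def using ms mc c0 unfolding mchar_def by simp
  qed
  moreover have "triv \<mu> (max n1 n2)"
    unfolding triv_def
  proof
    fix w assume w: "w \<in> U (max n1 n2)"
    then have "w \<in> U 0" using U_mono[of 0] by blast
    then show "\<mu> w = 1" using u triv_div[OF n1 n2] w unfolding triv_def by simp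
  qed
  ultimately have "is_char v \<mu>" using char_of by blast
  moreover have "\<mu> \<pi> = 1" unfolding \<mu>_def using s c0 vpi by simp
  ultimately show "\<mu> \<in> charX v \<pi>" by (simp add: charX_def)
qed

end

lemma cube_roots: fixes a b c :: complex
  assumes "a ^ 3 = 1" "b ^ 3 = 1" "c ^ 3 = 1" "a \<noteq> 1" "b \<noteq> 1" "c \<noteq> 1" "a \<noteq> b"
  shows "c * a = 1 \<or> c * b = 1"
proof -
  have q: "z * z + z + 1 = 0" if "z ^ 3 = 1" "z \<noteq> 1" for z :: complex
  proof -
    have "(z - 1) * (z * z + z + 1) = 0" using that by (simp add: algebra_simps power3_eq_cube)
    then show ?thesis using that by simp
  qed
  have qa: "a * a + a + 1 = 0" and qb: "b * b + b + 1 = 0" and qc: "c * c + c + 1 = 0" using q assms by auto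
  have "(a - b) * (a + b + 1) = (a * a + a + 1) - (b * b + b + 1)" by (simp add: algebra_simps)
  then have "(a - b) * (a + b + 1) = 0" using qa qb by simp
  then have s1: "a + b + 1 = 0" using assms(7) by simp
  have s: "a + b = -1"
  proof -
    have "a + b = (a + b + 1) - 1" by simp
    then show ?thesis using s1 by simp
  qed
  have p: "a * b = 1"
  proof -
    have "a * b = - (a * a + a + 1) + a * (a + b + 1) + 1" by (simp add: algebra_simps)
    then show ?thesis using qa s1 by simp
  qed
  have "(c - a) * (c - b) = 0"
  proof -
    have "(c - a) * (c - b) = c * c - (a + b) * c + a * b" by (simp add: algebra_simps)
    also have "\<dots> = c * c + c + 1" using s p by simp
    finally show ?thesis using qc by simp
  qed
  then have "c = a \<or> c = b" by simp
  then show ?thesis using p by (auto simp: mult.commute)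
qed

context LF begin

lemma mchar_mulI: "mchar f \<Longrightarrow> x \<noteq> 0 \<Longrightarrow> y \<noteq> 0 \<Longrightarrow> f (x * y) = f x * f y"
  unfolding mchar_def by blast

lemma mchar_nzI: "mchar f \<Longrightarrow> x \<noteq> 0 \<Longrightarrow> f x \<noteq> 0"
  unfolding mchar_def by blast

lemma mchar_divI: assumes "mchar f" "x \<noteq> 0" "y \<noteq> 0" shows "f (x / y) = f x / f y"
proof -
  have "f x = f ((x / y) * y)" using assms by simp
  also have "\<dots> = f (x / y) * f y" by (rule mchar_mulI[OF assms(1)]) (use assms in simp_all)
  finally show ?thesis using mchar_nzI[OF assms(1,3)] by (simp add: field_simps)
qed

lemma ratio_sym: assumes "s \<noteq> 0" "t \<noteq> 0" "s / t \<in> U n" shows "t / s \<in> U n"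
proof -
  have e: "t / s = inverse (s / t)" using assms by simp
  show ?thesis unfolding e by (rule U_inv[OF assms(3)])
qed

lemma ratio_trans: assumes "s \<noteq> 0" "t \<noteq> 0" "u \<noteq> 0" "s / t \<in> U n" "t / u \<in> U n" shows "s / u \<in> U n"
proof -
  have e: "s / u = (s / t) * (t / u)" using assms by simp
  show ?thesis unfolding e by (rule U_mult[OF assms(4,5)])
qed

lemma four_incong: assumes q: "resq v \<le> 3" and j: "j > 0"
  and s: "s1 \<in> U j" "s2 \<in> U j" "s3 \<in> U j" "s4 \<in> U j"
  and n: "s2 / s1 \<notin> U (Suc j)" "s3 / s1 \<notin> U (Suc j)" "s4 / s1 \<notin> U (Suc j)"
     "s3 / s2 \<notin> U (Suc j)" "s4 / s2 \<notin> U (Suc j)" "s4 / s3 \<notin> U (Suc j)"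
  shows False
proof -
  have nz: "s1 \<noteq> 0" "s2 \<noteq> 0" "s3 \<noteq> 0" "s4 \<noteq> 0" using s U_unit by auto
  have n': "s1 / s2 \<notin> U (Suc j)" "s1 / s3 \<notin> U (Suc j)" "s1 / s4 \<notin> U (Suc j)"
     "s2 / s3 \<notin> U (Suc j)" "s2 / s4 \<notin> U (Suc j)" "s3 / s4 \<notin> U (Suc j)"
    using n nz ratio_sym by blast+
  have d: "s1 \<noteq> s2" "s1 \<noteq> s3" "s1 \<noteq> s4" "s2 \<noteq> s3" "s2 \<noteq> s4" "s3 \<noteq> s4"
    using n nz by (metis U_one divide_self)+
  have "card {s1, s2, s3, s4} \<le> resq v"
  proof (rule cong_pigeon[OF j])
    show "{s1, s2, s3, s4} \<subseteq> U j" using s by auto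
    fix x y assume "x \<in> {s1, s2, s3, s4}" "y \<in> {s1, s2, s3, s4}" "x \<noteq> y"
    then show "x / y \<notin> U (Suc j)" using n n' by auto
  qed
  moreover have "card {s1, s2, s3, s4} = 4" using d by simp
  ultimately show False using q by simp
qed

lemma three_incong: assumes q: "resq v \<le> 2" and j: "j > 0"
  and s: "s1 \<in> U j" "s2 \<in> U j" "s3 \<in> U j"
  and n: "s2 / s1 \<notin> U (Suc j)" "s3 / s1 \<notin> U (Suc j)" "s3 / s2 \<notin> U (Suc j)"
  shows False
proof -
  have nz: "s1 \<noteq> 0" "s2 \<noteq> 0" "s3 \<noteq> 0" using s U_unit by auto
  have n': "s1 / s2 \<notin> U (Suc j)" "s1 / s3 \<notin> U (Suc j)" "s2 / s3 \<notin> U (Suc j)"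
    using n nz ratio_sym by blast+
  have d: "s1 \<noteq> s2" "s1 \<noteq> s3" "s2 \<noteq> s3"
    using n nz by (metis U_one divide_self)+
  have "card {s1, s2, s3} \<le> resq v"
  proof (rule cong_pigeon[OF j])
    show "{s1, s2, s3} \<subseteq> U j" using s by auto
    fix x y assume "x \<in> {s1, s2, s3}" "y \<in> {s1, s2, s3}" "x \<noteq> y"
    then show "x / y \<notin> U (Suc j)" using n n' by auto
  qed
  moreover have "card {s1, s2, s3} = 3" using d by simp
  ultimately show False using q by simp
qed

lemma q2_cong: assumes q: "resq v = 2" and j: "j > 0" and xy: "x \<in> U j" "y \<in> U j" "x \<notin> U (Suc j)" "y \<notin> U (Suc j)"
  shows "y / x \<in> U (Suc j)"
proof (rule ccontr)
  assume "y / x \<notin> U (Suc j)"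
  then show False using three_incong[of j 1 x y] q j xy by simp
qed

lemma q2_val: assumes q: "resq v = 2" and j: "j > 0" and f: "mchar f" "triv f (Suc j)" "\<not> triv f j"
  and u: "u \<in> U j" "u \<notin> U (Suc j)"
  shows "f u = -1"
proof -
  obtain x0 where x0: "x0 \<in> U j" "f x0 \<noteq> 1" using f(3) unfolding triv_def by blast
  have x0W: "x0 \<notin> U (Suc j)" using x0 f(2) unfolding triv_def by blast
  have nz: "x0 \<noteq> 0" "u \<noteq> 0" using x0 u U_unit by auto
  have ix: "inverse x0 \<in> U j" "inverse x0 \<notin> U (Suc j)" using x0 x0W U_inv nz
    by (auto, metis inverse_inverse_eq U_inv)
  have "inverse x0 / x0 \<in> U (Suc j)" using q2_cong[OF q j x0(1) ix(1) x0W ix(2)] .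
  then have "f (inverse x0 / x0) = 1" using f(2) unfolding triv_def by blast
  moreover have "f (inverse x0 / x0) = inverse (f x0) * inverse (f x0)"
    using f(1) nz mchar_inv[OF f(1)] unfolding mchar_def divide_inverse
    by (metis inverse_nonzero_iff_nonzero)
  ultimately have "f x0 * f x0 = 1" by (metis inverse_mult_distrib inverse_eq_1_iff)
  then have fx0: "f x0 = -1" using x0(2) by (metis (no_types) add.inverse_inverse mult_cancel_left1 square_eq_1_iff)
  have "u / x0 \<in> U (Suc j)" using q2_cong[OF q j x0(1) u(1) x0W u(2)] .
  then have "f (u / x0) = 1" using f(2) unfolding triv_def by blast
  moreover have "f u = f (u / x0) * f x0"
    using mchar_divI[OF f(1) nz(2) nz(1)] mchar_nzI[OF f(1) nz(1)] by simp
  ultimately show ?thesis using fx0 by simp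
qed

end

context LF begin

lemma q3_struct: assumes q: "resq v = 3" and j: "j > 0" and x0: "x0 \<in> U j" "x0 \<notin> U (Suc j)"
  shows "x0 ^ 3 \<in> U (Suc j)" "\<And>y. y \<in> U j \<Longrightarrow> y \<in> U (Suc j) \<or> y / x0 \<in> U (Suc j) \<or> y * x0 \<in> U (Suc j)"
proof -
  let ?W = "U (Suc j)"
  have x00: "x0 \<noteq> 0" using x0 U_unit by auto
  have sq: "x0 * x0 \<notin> ?W"
  proof
    assume sq: "x0 * x0 \<in> ?W"
    obtain a b c where abc: "vge a 0" "vge b 0" "vge c 0" "\<not> vge (a - b) 1" "\<not> vge (a - c) 1" "\<not> vge (b - c) 1"
      using reps3 q by auto
    define pa where "pa = 1 + a * \<pi> ^ j"
    define pb where "pb = 1 + b * \<pi> ^ j"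
    define pc where "pc = 1 + c * \<pi> ^ j"
    have pU: "pa \<in> U j" "pb \<in> U j" "pc \<in> U j" unfolding pa_def pb_def pc_def using pt_U j abc by auto
    have pn: "pa / pb \<notin> ?W" "pa / pc \<notin> ?W" "pb / pc \<notin> ?W"
      unfolding pa_def pb_def pc_def using pt_incong j abc by auto
    have nz: "pa \<noteq> 0" "pb \<noteq> 0" "pc \<noteq> 0" using pU U_unit by auto
    have one: "(1::'a) \<noteq> 0" by simp
    have tr: "s / u \<in> ?W" if "s / t \<in> ?W" "u / t \<in> ?W" "s \<noteq> 0" "t \<noteq> 0" "u \<noteq> 0" for s t u
      using ratio_trans[of s t u] ratio_sym[of u t] that by blast
    obtain z where z: "z \<in> U j" "z \<notin> ?W" "z / x0 \<notin> ?W"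
    proof -
      have c1: "\<not> (pa / 1 \<in> ?W \<and> pb / 1 \<in> ?W)" "\<not> (pa / 1 \<in> ?W \<and> pc / 1 \<in> ?W)" "\<not> (pb / 1 \<in> ?W \<and> pc / 1 \<in> ?W)"
        using tr[of pa 1 pb] tr[of pa 1 pc] tr[of pb 1 pc] pn nz one by blast+
      have c2: "\<not> (pa / x0 \<in> ?W \<and> pb / x0 \<in> ?W)" "\<not> (pa / x0 \<in> ?W \<and> pc / x0 \<in> ?W)" "\<not> (pb / x0 \<in> ?W \<and> pc / x0 \<in> ?W)"
        using tr[of pa x0 pb] tr[of pa x0 pc] tr[of pb x0 pc] pn nz x00 by blast+
      have "(pa \<notin> ?W \<and> pa / x0 \<notin> ?W) \<or> (pb \<notin> ?W \<and> pb / x0 \<notin> ?W) \<or> (pc \<notin> ?W \<and> pc / x0 \<notin> ?W)"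
        using c1 c2 by auto
      then show ?thesis using that pU by blast
    qed
    have z0: "z \<noteq> 0" using z U_unit by auto
    have zx: "x0 * z \<in> U j" using U_mult x0 z by blast
    show False
    proof (rule four_incong[OF _ j U_one x0(1) z(1) zx])
      show "resq v \<le> 3" using q by simp
      show "x0 / 1 \<notin> ?W" using x0 by simp
      show "z / 1 \<notin> ?W" using z by simp
      show "z / x0 \<notin> ?W" using z by simp
      show "x0 * z / 1 \<notin> ?W"
      proof
        assume "x0 * z / 1 \<in> ?W"
        then have "(x0 * z) * inverse (x0 * x0) \<in> ?W" using U_mult[OF _ U_inv[OF sq]] by simp
        moreover have "(x0 * z) * inverse (x0 * x0) = z / x0" using x00 by (simp add: field_simps)
        ultimately show False using z by simp
      qed
      show "x0 * z / x0 \<notin> ?W" using z x00 by simp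
      show "x0 * z / z \<notin> ?W" using x0 z0 by simp
    qed
  qed
  have ix: "inverse x0 \<in> U j" using U_inv x0 by blast
  show cls: "y \<in> ?W \<or> y / x0 \<in> ?W \<or> y * x0 \<in> ?W" if y: "y \<in> U j" for y
  proof (rule ccontr)
    assume h: "\<not> ?thesis"
    show False
    proof (rule four_incong[OF _ j U_one x0(1) ix y])
      show "resq v \<le> 3" using q by simp
      show "x0 / 1 \<notin> ?W" using x0 by simp
      show "inverse x0 / 1 \<notin> ?W" using x0 U_inv by (metis div_by_1 inverse_inverse_eq)
      show "inverse x0 / x0 \<notin> ?W"
      proof
        assume "inverse x0 / x0 \<in> ?W"
        then have "inverse (inverse x0 / x0) \<in> ?W" using U_inv by blast
        moreover have "inverse (inverse x0 / x0) = x0 * x0" using x00 by (simp add: field_simps)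
        ultimately show False using sq by simp
      qed
      show "y / 1 \<notin> ?W" using h by simp
      show "y / x0 \<notin> ?W" using h by simp
      show "y / inverse x0 \<notin> ?W" using h by (simp add: divide_inverse)
    qed
  qed
  have "x0 * x0 \<in> U j" using U_mult x0 by blast
  then have "x0 * x0 \<in> ?W \<or> x0 * x0 / x0 \<in> ?W \<or> x0 * x0 * x0 \<in> ?W" by (rule cls)
  then show "x0 ^ 3 \<in> ?W" using sq x0 x00 by (auto simp: power3_eq_cube)
qed

lemma q3_val: assumes q: "resq v = 3" and j: "j > 0" and x0: "x0 \<in> U j" "x0 \<notin> U (Suc j)"
  and f: "mchar f" "triv f (Suc j)"
  shows "f x0 ^ 3 = 1" "triv f j \<longleftrightarrow> f x0 = 1"
proof -
  have x00: "x0 \<noteq> 0" using x0 U_unit by auto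
  show "f x0 ^ 3 = 1" using q3_struct(1)[OF q j x0] f mchar_pow[OF f(1) x00] unfolding triv_def by metis
  show "triv f j \<longleftrightarrow> f x0 = 1"
  proof
    assume "triv f j" then show "f x0 = 1" using x0 unfolding triv_def by blast
  next
    assume f1: "f x0 = 1"
    show "triv f j" unfolding triv_def
    proof
      fix y assume y: "y \<in> U j"
      have y0: "y \<noteq> 0" using y U_unit by auto
      have "y \<in> U (Suc j) \<or> y / x0 \<in> U (Suc j) \<or> y * x0 \<in> U (Suc j)" using q3_struct(2)[OF q j x0 y] .
      moreover have "f (y / x0) = f y" using mchar_divI[OF f(1) y0 x00] f1 by simp
      moreover have "f (y * x0) = f y" using mchar_mulI[OF f(1) y0 x00] f1 by simp
      ultimately show "f y = 1" using f(2) unfolding triv_def by metis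
    qed
  qed
qed

end

locale LF2 = LF v \<pi> for v :: "'a::field_char_0 \<Rightarrow> int" and \<pi> :: 'a +
  fixes \<chi>1 \<chi>2 :: "'a \<Rightarrow> complex" and k :: nat
  assumes c1: "is_char v \<chi>1" and c2: "is_char v \<chi>2" and k2: "k \<ge> 2"
    and cd1: "cond v \<chi>1 = k" and cd2: "cond v \<chi>2 = k"
begin

lemma t1: "\<exists>n. triv \<chi>1 n" using char_triv[OF c1] .
lemma t2: "\<exists>n. triv \<chi>2 n" using char_triv[OF c2] .
lemma m1: "mchar \<chi>1" using char_mchar[OF c1] .
lemma m2: "mchar \<chi>2" using char_mchar[OF c2] .
lemma k0: "k > 0" using k2 by simp

lemma ch1: "triv \<chi>1 k" "\<not> triv \<chi>1 (k - 1)" using cond_eq_iff[OF t1 k0] cd1 by auto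
lemma ch2: "triv \<chi>2 k" "\<not> triv \<chi>2 (k - 1)" using cond_eq_iff[OF t2 k0] cd2 by auto

lemma sepP: assumes j: "j > 0" and ab: "vge a 0" "vge b 0" "\<not> vge (a - b) 1"
  shows "\<exists>\<mu>. (is_char v \<mu> \<and> \<mu> \<pi> = 1 \<and> triv \<mu> (Suc j)) \<and> \<mu> (1 + a * \<pi> ^ j) \<noteq> \<mu> (1 + b * \<pi> ^ j)"
proof -
  let ?x = "1 + a * \<pi> ^ j" and ?y = "1 + b * \<pi> ^ j"
  have xy: "?x \<in> U j" "?y \<in> U j" using pt_U j ab by auto
  have nz: "?x \<noteq> 0" "?y \<noteq> 0" using xy U_unit by auto
  have "?x / ?y \<in> U 0" using U_div[OF xy] U_mono[of 0 j] by blast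
  moreover have "?x / ?y \<notin> U (Suc j)" using pt_incong j ab by blast
  ultimately obtain \<mu> where mu: "is_char v \<mu>" "\<mu> \<pi> = 1" "triv \<mu> (Suc j)" "\<mu> (?x / ?y) \<noteq> 1"
    using sep_char by blast
  have "\<mu> (?x / ?y) = \<mu> ?x / \<mu> ?y" using mchar_divI[OF char_mchar[OF mu(1)] nz] .
  then have "\<mu> ?x \<noteq> \<mu> ?y" using mu(4) char_nz[OF mu(1) nz(2)] by auto
  then show ?thesis using mu by blast
qed

lemma part1:
  assumes h: "resq v > 3 \<or> (resq v = 3 \<and> cond v (\<lambda>x. \<chi>1 x / \<chi>2 x) < k)"
  shows "\<exists>\<mu>\<in>charX v \<pi>. cond v \<mu> = k \<and> cond v (\<lambda>x. \<mu> x * \<chi>1 x) = k \<and> cond v (\<lambda>x. \<mu> x * \<chi>2 x) = k"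
proof (rule ccontr)
  assume nt: "\<not> ?thesis"
  define j where "j = k - 1"
  have j: "j > 0" "Suc j = k" "k - 1 = j" unfolding j_def using k2 by auto
  define P where "P = {\<mu>. is_char v \<mu> \<and> \<mu> \<pi> = 1 \<and> triv \<mu> k}"
  define V where "V = U j"
  define e1 where "e1 = (\<lambda>x. inverse (\<chi>1 x))"
  define e2 where "e2 = (\<lambda>x. inverse (\<chi>2 x))"
  have closed: "(\<lambda>x. f x * g x) \<in> P" if "f \<in> P" "g \<in> P" for f g
    using that char_mul triv_mul[of f k g k] unfolding P_def by auto
  have nz: "f x \<noteq> 0" if "f \<in> P" "x \<in> V" for f x
    using that char_nz U_unit unfolding P_def V_def by blast
  have cls: "(\<forall>x\<in>V. f x = 1) \<or> (\<forall>x\<in>V. f x = e1 x) \<or> (\<forall>x\<in>V. f x = e2 x)" if f: "f \<in> P" for f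
  proof (rule ccontr)
    assume "\<not> ?thesis"
    then have n: "\<not> triv f j" "\<not> triv (\<lambda>x. f x * \<chi>1 x) j" "\<not> triv (\<lambda>x. f x * \<chi>2 x) j"
      unfolding triv_def V_def e1_def e2_def
      using char_nz[OF c1] char_nz[OF c2] U_unit
      by (auto simp: field_simps)
    have fc: "is_char v f" "f \<pi> = 1" "triv f k" using f unfolding P_def by auto
    have tf: "\<exists>n. triv f n" using fc by blast
    have "cond v f = k" using cond_eq_iff[OF tf k0] fc n j by simp
    moreover have "cond v (\<lambda>x. f x * \<chi>1 x) = k"
      using cond_eq_iff[OF ex_triv_mul[OF tf t1] k0] triv_mul[OF fc(3) ch1(1)] n j by simp
    moreover have "cond v (\<lambda>x. f x * \<chi>2 x) = k"
      using cond_eq_iff[OF ex_triv_mul[OF tf t2] k0] triv_mul[OF fc(3) ch2(1)] n j by simp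
    moreover have "f \<in> charX v \<pi>" using fc by (simp add: charX_def)
    ultimately show False using nt by blast
  qed
  have sep2: "\<exists>f\<in>P. f (1 + a * \<pi> ^ j) \<noteq> f (1 + b * \<pi> ^ j)" if "vge a 0" "vge b 0" "\<not> vge (a - b) 1" for a b
    using sepP[OF j(1) that] j unfolding P_def by auto
  show False
  proof (cases "resq v > 3")
    case True
    then have "resq v \<ge> 4" by simp
    then obtain a b c d where abcd: "vge a 0" "vge b 0" "vge c 0" "vge d 0" "\<not> vge (a - b) 1" "\<not> vge (a - c) 1" "\<not> vge (b - c) 1"
      "\<not> vge (a - d) 1" "\<not> vge (b - d) 1" "\<not> vge (c - d) 1" using reps4 by blast
    have abcd': "\<not> vge (b - a) 1" "\<not> vge (c - a) 1" "\<not> vge (c - b) 1"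
      "\<not> vge (d - a) 1" "\<not> vge (d - b) 1" "\<not> vge (d - c) 1" using abcd cong_sym by blast+
    define p where "p s = 1 + s * \<pi> ^ j" for s
    define X where "X = {p a, p b, p c, p d}"
    have pd: "p s \<noteq> p t" if st: "\<not> vge (s - t) 1" "vge s 0" "vge t 0" for s t
    proof
      assume e: "p s = p t"
      have "p t \<noteq> 0" using pt_U[OF j(1) st(3)] U_unit unfolding p_def by blast
      then have "p s / p t = 1" using e by simp
      moreover have "p s / p t \<notin> U (Suc j)" unfolding p_def by (rule pt_incong[OF j(1) st(2,3,1)])
      ultimately show False by simp
    qed
    have d: "p a \<noteq> p b" "p a \<noteq> p c" "p a \<noteq> p d" "p b \<noteq> p c" "p b \<noteq> p d" "p c \<noteq> p d"
      using pd[OF abcd(5) abcd(1,2)] pd[OF abcd(6) abcd(1,3)] pd[OF abcd(8) abcd(1,4)]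
        pd[OF abcd(7) abcd(2,3)] pd[OF abcd(9) abcd(2,4)] pd[OF abcd(10) abcd(3,4)] by auto
    have "card X = 4" unfolding X_def using d by simp
    moreover have "X \<subseteq> V" unfolding X_def V_def p_def using pt_U j abcd by auto
    moreover have "\<exists>f\<in>P. f x \<noteq> f y" if "x \<in> X" "y \<in> X" "x \<noteq> y" for x y
      using that sep2 abcd abcd' unfolding X_def p_def by auto
    ultimately show False using comb[of P V e1 e2 X] closed nz cls by auto
  next
    case False
    then have q: "resq v = 3" "cond v (\<lambda>x. \<chi>1 x / \<chi>2 x) < k" using h by auto
    have "cond v (\<lambda>x. \<chi>1 x / \<chi>2 x) \<le> j" using q(2) j(2) by simp
    then have "triv (\<lambda>x. \<chi>1 x / \<chi>2 x) j"
      using cond_le_iff[OF ex_triv_div[OF t1 t2]] by blast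
    then have ee: "\<forall>x\<in>V. e1 x = e2 x" unfolding triv_def V_def e1_def e2_def
      using char_nz[OF c2] U_unit by (auto simp: field_simps)
    obtain a b c where abc: "vge a 0" "vge b 0" "vge c 0" "\<not> vge (a - b) 1" "\<not> vge (a - c) 1" "\<not> vge (b - c) 1"
      using reps3 q by auto
    have abc': "\<not> vge (b - a) 1" "\<not> vge (c - a) 1" "\<not> vge (c - b) 1" using abc cong_sym by blast+
    define p where "p s = 1 + s * \<pi> ^ j" for s
    define X where "X = {p a, p b, p c}"
    have pd: "p s \<noteq> p t" if st: "\<not> vge (s - t) 1" "vge s 0" "vge t 0" for s t
    proof
      assume e: "p s = p t"
      have "p t \<noteq> 0" using pt_U[OF j(1) st(3)] U_unit unfolding p_def by blast
      then have "p s / p t = 1" using e by simp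
      moreover have "p s / p t \<notin> U (Suc j)" unfolding p_def by (rule pt_incong[OF j(1) st(2,3,1)])
      ultimately show False by simp
    qed
    have d: "p a \<noteq> p b" "p a \<noteq> p c" "p b \<noteq> p c"
      using pd[OF abc(4) abc(1,2)] pd[OF abc(5) abc(1,3)] pd[OF abc(6) abc(2,3)] by auto
    have "card X = 3" unfolding X_def using d by simp
    moreover have "X \<subseteq> V" unfolding X_def V_def p_def using pt_U j abc by auto
    moreover have "\<exists>f\<in>P. f x \<noteq> f y" if "x \<in> X" "y \<in> X" "x \<noteq> y" for x y
      using that sep2 abc abc' unfolding X_def p_def by auto
    ultimately show False using comb[of P V e1 e2 X] closed nz cls ee by auto
  qed
qed

end

context LF2 begin

lemma U0_nz: "x \<in> U n \<Longrightarrow> x \<noteq> 0" using U_unit by blast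

lemma triv_canc_mul: "triv f n \<Longrightarrow> triv (\<lambda>x. f x * g x) n \<Longrightarrow> triv g n"
  unfolding triv_def by auto

lemma triv_canc_div: "triv f n \<Longrightarrow> triv (\<lambda>x. f x / g x) n \<Longrightarrow> triv g n"
  unfolding triv_def by (auto simp: divide_eq_1_iff)

lemma triv_swap: "triv (\<lambda>x. f x / g x) n \<Longrightarrow> triv (\<lambda>x. g x / f x) n"
  unfolding triv_def by (auto simp: divide_eq_1_iff)

lemma triv_mul_same: "triv f n \<Longrightarrow> triv g n \<Longrightarrow> triv (\<lambda>x. f x * g x) n"
  using triv_mul[of f n g n] by simp

lemma triv_div_same: "triv f n \<Longrightarrow> triv g n \<Longrightarrow> triv (\<lambda>x. f x / g x) n"
  using triv_div[of f n g n] by simp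

lemma ex_exact: assumes "i > 0 \<or> resq v \<ge> 3"
  shows "\<exists>\<sigma>. is_char v \<sigma> \<and> \<sigma> \<pi> = 1 \<and> triv \<sigma> (Suc i) \<and> \<not> triv \<sigma> i"
proof (cases "i > 0")
  case True
  then show ?thesis using exact_char Uj_ex[OF True] by blast
next
  case False
  then have "i = 0" "resq v \<ge> 3" using assms by auto
  then obtain g where "g \<in> U 0" "g \<notin> U 1" using U0_ex by blast
  then show ?thesis using exact_char[of g 0] \<open>i = 0\<close> by simp
qed

lemma tw_cond: assumes s: "is_char v \<sigma>" and c: "is_char v \<chi>"
  and h: "\<And>x. x \<in> U 0 \<Longrightarrow> f x = g x"
  and tg: "\<exists>n. triv g n" and cpos: "c > 0" and t: "triv g c" and nt: "\<not> triv g (c - 1)"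
  shows "cond v f = c"
proof -
  have "cond v f = cond v g" using cond_cong h by blast
  also have "\<dots> = c" using cond_eq_iff[OF tg cpos] t nt by simp
  finally show ?thesis .
qed

lemma part2: assumes q: "resq v = 3" and cd: "cond v (\<lambda>x. \<chi>1 x / \<chi>2 x) = k"
  shows "Max {cond v (\<lambda>x. \<mu> x * \<chi>1 x) + cond v (\<lambda>x. \<mu> x * \<chi>2 x) | \<mu>. \<mu> \<in> charX' v \<pi> k} = 2 * k - 1"
proof -
  define j where "j = k - 1"
  have j: "j > 0" "Suc j = k" "k - 1 = j" unfolding j_def using k2 by auto
  have t12: "\<exists>n. triv (\<lambda>x. \<chi>1 x / \<chi>2 x) n" using ex_triv_div[OF t1 t2] .
  have nq: "\<not> triv (\<lambda>x. \<chi>1 x / \<chi>2 x) j" using cond_eq_iff[OF t12 k0] cd j by simp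
  define S where "S = {cond v (\<lambda>x. \<mu> x * \<chi>1 x) + cond v (\<lambda>x. \<mu> x * \<chi>2 x) | \<mu>. \<mu> \<in> charX' v \<pi> k}"
  have ub: "s \<le> 2 * k - 1" if sS: "s \<in> S" for s
  proof -
    obtain \<mu> where mu: "\<mu> \<in> charX' v \<pi> k" "s = cond v (\<lambda>x. \<mu> x * \<chi>1 x) + cond v (\<lambda>x. \<mu> x * \<chi>2 x)"
      using sS unfolding S_def by blast
    have mc: "is_char v \<mu>" "cond v \<mu> = k" using mu unfolding charX'_def charX_def by auto
    have tm: "\<exists>n. triv \<mu> n" using char_triv[OF mc(1)] .
    have mk: "triv \<mu> k" "\<not> triv \<mu> j" using cond_eq_iff[OF tm k0] mc j by auto
    have tA: "\<exists>n. triv (\<lambda>x. \<mu> x * \<chi>1 x) n" "\<exists>n. triv (\<lambda>x. \<mu> x * \<chi>2 x) n"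
      using ex_triv_mul tm t1 t2 by blast+
    have le: "cond v (\<lambda>x. \<mu> x * \<chi>1 x) \<le> k" "cond v (\<lambda>x. \<mu> x * \<chi>2 x) \<le> k"
      using cond_le_iff[OF tA(1)] cond_le_iff[OF tA(2)] triv_mul_same[OF mk(1) ch1(1)] triv_mul_same[OF mk(1) ch2(1)]
      by auto
    have "\<not> (cond v (\<lambda>x. \<mu> x * \<chi>1 x) = k \<and> cond v (\<lambda>x. \<mu> x * \<chi>2 x) = k)"
    proof
      assume "cond v (\<lambda>x. \<mu> x * \<chi>1 x) = k \<and> cond v (\<lambda>x. \<mu> x * \<chi>2 x) = k"
      then have n1: "\<not> triv (\<lambda>x. \<mu> x * \<chi>1 x) j" and n2: "\<not> triv (\<lambda>x. \<mu> x * \<chi>2 x) j"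
        using cond_eq_iff[OF tA(1) k0] cond_eq_iff[OF tA(2) k0] j by auto
      define x0 where "x0 = 1 + \<pi> ^ j"
      have x0: "x0 \<in> U j" "x0 \<notin> U (Suc j)" unfolding x0_def using Uj_ex[OF j(1)] by auto
      have x00: "x0 \<noteq> 0" using x0 U0_nz by blast
      have mm: "mchar \<mu>" using char_mchar[OF mc(1)] .
      have kk: "triv f (Suc j)" if "triv f k" for f using that j by simp
      note qv = q3_val[OF q j(1) x0]
      have a: "\<chi>1 x0 ^ 3 = 1" "\<chi>1 x0 \<noteq> 1" using qv[OF m1 kk[OF ch1(1)]] ch1(2) j by auto
      have b: "\<chi>2 x0 ^ 3 = 1" "\<chi>2 x0 \<noteq> 1" using qv[OF m2 kk[OF ch2(1)]] ch2(2) j by auto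
      have c: "\<mu> x0 ^ 3 = 1" "\<mu> x0 \<noteq> 1" using qv[OF mm kk[OF mk(1)]] mk(2) by auto
      have "\<chi>1 x0 / \<chi>2 x0 \<noteq> 1"
        using qv(2)[OF mchar_div[OF m1 m2] kk[OF triv_div_same[OF ch1(1) ch2(1)]]] nq by simp
      then have ab: "\<chi>1 x0 \<noteq> \<chi>2 x0" using char_nz[OF c1 x00] by auto
      have "\<mu> x0 * \<chi>1 x0 \<noteq> 1"
        using qv(2)[OF mchar_mul[OF mm m1] kk[OF triv_mul_same[OF mk(1) ch1(1)]]] n1 by simp
      moreover have "\<mu> x0 * \<chi>2 x0 \<noteq> 1"
        using qv(2)[OF mchar_mul[OF mm m2] kk[OF triv_mul_same[OF mk(1) ch2(1)]]] n2 by simp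
      ultimately show False using cube_roots[OF a(1) b(1) c(1) a(2) b(2) c(2) ab] by blast
    qed
    then show ?thesis using le mu(2) by linarith
  qed
  have wit: "2 * k - 1 \<in> S"
  proof -
    obtain \<sigma> where s: "is_char v \<sigma>" "\<sigma> \<pi> = 1" "triv \<sigma> (Suc (k - 2))" "\<not> triv \<sigma> (k - 2)"
      using ex_exact[of "k - 2"] q by auto
    have sk: "triv \<sigma> j" "\<not> triv \<sigma> (j - 1)" using s k2 j by (auto simp: Suc_diff_Suc numeral_2_eq_2)
    have ts: "\<exists>n. triv \<sigma> n" using sk by blast
    define \<mu> where "\<mu> = (\<lambda>x. \<sigma> x * \<chi>1 \<pi> powi v x / \<chi>1 x)"
    have mu: "\<mu> \<in> charX v \<pi>" "\<And>x. x \<in> U 0 \<Longrightarrow> \<mu> x = \<sigma> x / \<chi>1 x"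
      using twist[OF s(1) s(2) c1] unfolding \<mu>_def by auto
    have nz1: "\<And>x. x \<in> U 0 \<Longrightarrow> \<chi>1 x \<noteq> 0" using char_nz[OF c1] U0_nz by blast
    have skk: "triv \<sigma> k" using triv_mono[OF sk(1)] j by simp
    have "cond v \<mu> = k"
    proof (rule tw_cond[OF s(1) c1, of _ "\<lambda>x. \<sigma> x / \<chi>1 x"])
      show "\<And>x. x \<in> U 0 \<Longrightarrow> \<mu> x = \<sigma> x / \<chi>1 x" by (rule mu(2))
      show "\<exists>n. triv (\<lambda>x. \<sigma> x / \<chi>1 x) n" using ex_triv_div[OF ts t1] .
      show "k > 0" by (rule k0)
      show "triv (\<lambda>x. \<sigma> x / \<chi>1 x) k" using triv_div_same[OF skk ch1(1)] .
      show "\<not> triv (\<lambda>x. \<sigma> x / \<chi>1 x) (k - 1)" using triv_canc_div[OF sk(1)] ch1(2) j by auto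
    qed
    moreover have "cond v (\<lambda>x. \<mu> x * \<chi>1 x) = k - 1"
    proof (rule tw_cond[OF s(1) c1, of _ \<sigma>])
      show "\<And>x. x \<in> U 0 \<Longrightarrow> \<mu> x * \<chi>1 x = \<sigma> x" using mu(2) nz1 by simp
      show "\<exists>n. triv \<sigma> n" by (rule ts)
      show "k - 1 > 0" using j by simp
      show "triv \<sigma> (k - 1)" using sk j by simp
      show "\<not> triv \<sigma> (k - 1 - 1)" using sk j by simp
    qed
    moreover have "cond v (\<lambda>x. \<mu> x * \<chi>2 x) = k"
    proof (rule tw_cond[OF s(1) c1, of _ "\<lambda>x. \<sigma> x * (\<chi>2 x / \<chi>1 x)"])
      show "\<And>x. x \<in> U 0 \<Longrightarrow> \<mu> x * \<chi>2 x = \<sigma> x * (\<chi>2 x / \<chi>1 x)" using mu(2) nz1 by simp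
      show "\<exists>n. triv (\<lambda>x. \<sigma> x * (\<chi>2 x / \<chi>1 x)) n" using ex_triv_mul[OF ts ex_triv_div[OF t2 t1]] .
      show "k > 0" by (rule k0)
      show "triv (\<lambda>x. \<sigma> x * (\<chi>2 x / \<chi>1 x)) k" using triv_mul_same[OF skk triv_div_same[OF ch2(1) ch1(1)]] .
      show "\<not> triv (\<lambda>x. \<sigma> x * (\<chi>2 x / \<chi>1 x)) (k - 1)"
      proof
        assume "triv (\<lambda>x. \<sigma> x * (\<chi>2 x / \<chi>1 x)) (k - 1)"
        then have "triv (\<lambda>x. \<chi>2 x / \<chi>1 x) j" using triv_canc_mul[OF sk(1)] j by simp
        then show False using triv_swap nq by blast
      qed
    qed
    moreover have "\<mu> \<in> charX' v \<pi> k" using mu(1) calculation(1) by (simp add: charX'_def)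
    ultimately have "(k - 1) + k \<in> S" unfolding S_def by force
    moreover have "(k - 1) + k = 2 * k - 1" using k2 by simp
    ultimately show ?thesis by simp
  qed
  have fin: "finite S" using ub by (meson finite_atMost finite_subset atMost_iff subsetI)
  show ?thesis unfolding S_def[symmetric] using Max_eqI[OF fin ub wit] .
qed

end

context LF2 begin

lemma q2_pair: assumes q: "resq v = 2" and j: "j > 0"
  and f: "mchar f" "triv f (Suc j)" "\<not> triv f j" and g: "mchar g" "triv g (Suc j)" "\<not> triv g j"
  shows "triv (\<lambda>x. f x * g x) j"
  unfolding triv_def
proof
  fix u assume u: "u \<in> U j"
  show "f u * g u = 1"
  proof (cases "u \<in> U (Suc j)")
    case True then show ?thesis using f g unfolding triv_def by simp
  next
    case False
    then show ?thesis using q2_val[OF q j f u False] q2_val[OF q j g u False] by simp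
  qed
qed

lemma part3: assumes q: "resq v = 2" and cd: "cond v (\<lambda>x. \<chi>1 x / \<chi>2 x) < k - 1"
  shows "(k > 2 \<longrightarrow> (\<exists>\<mu>\<in>charX v \<pi>. cond v \<mu> = k \<and> cond v (\<lambda>x. \<mu> x * \<chi>1 x) = k - 1
                         \<and> cond v (\<lambda>x. \<mu> x * \<chi>2 x) = k - 1)) \<and>
      (k = 2 \<longrightarrow> (\<forall>\<mu>\<in>charX v \<pi>. cond v \<mu> = 2 \<longrightarrow>
                         cond v (\<lambda>x. \<mu> x * \<chi>1 x) = 0 \<and> cond v (\<lambda>x. \<mu> x * \<chi>2 x) = 0))"
proof (intro conjI impI ballI)
  assume k3: "k > 2"
  define j where "j = k - 1"
  have j: "j > 0" "Suc j = k" "k - 1 = j" "j - 1 > 0" "Suc (j - 1) = j" unfolding j_def using k3 by auto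
  have t12: "\<exists>n. triv (\<lambda>x. \<chi>1 x / \<chi>2 x) n" using ex_triv_div[OF t1 t2] .
  have "cond v (\<lambda>x. \<chi>1 x / \<chi>2 x) \<le> j - 1" using cd j by simp
  then have q12: "triv (\<lambda>x. \<chi>1 x / \<chi>2 x) (j - 1)" using cond_le_iff[OF t12] by blast
  obtain \<sigma> where s: "is_char v \<sigma>" "\<sigma> \<pi> = 1" "triv \<sigma> (Suc (j - 1))" "\<not> triv \<sigma> (j - 1)"
    using ex_exact[of "j - 1"] j by auto
  have sk: "triv \<sigma> j" "\<not> triv \<sigma> (j - 1)" using s j by auto
  have ts: "\<exists>n. triv \<sigma> n" using sk by blast
  define \<mu> where "\<mu> = (\<lambda>x. \<sigma> x * \<chi>1 \<pi> powi v x / \<chi>1 x)"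
  have mu: "\<mu> \<in> charX v \<pi>" "\<And>x. x \<in> U 0 \<Longrightarrow> \<mu> x = \<sigma> x / \<chi>1 x"
    using twist[OF s(1) s(2) c1] unfolding \<mu>_def by auto
  have nz1: "\<And>x. x \<in> U 0 \<Longrightarrow> \<chi>1 x \<noteq> 0" using char_nz[OF c1] U0_nz by blast
  have skk: "triv \<sigma> k" using triv_mono[OF sk(1)] j by simp
  have "cond v \<mu> = k"
  proof (rule tw_cond[OF s(1) c1, of _ "\<lambda>x. \<sigma> x / \<chi>1 x"])
    show "\<And>x. x \<in> U 0 \<Longrightarrow> \<mu> x = \<sigma> x / \<chi>1 x" by (rule mu(2))
    show "\<exists>n. triv (\<lambda>x. \<sigma> x / \<chi>1 x) n" using ex_triv_div[OF ts t1] .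
    show "k > 0" by (rule k0)
    show "triv (\<lambda>x. \<sigma> x / \<chi>1 x) k" using triv_div_same[OF skk ch1(1)] .
    show "\<not> triv (\<lambda>x. \<sigma> x / \<chi>1 x) (k - 1)" using triv_canc_div[OF sk(1)] ch1(2) j by auto
  qed
  moreover have "cond v (\<lambda>x. \<mu> x * \<chi>1 x) = k - 1"
  proof (rule tw_cond[OF s(1) c1, of _ \<sigma>])
    show "\<And>x. x \<in> U 0 \<Longrightarrow> \<mu> x * \<chi>1 x = \<sigma> x" using mu(2) nz1 by simp
    show "\<exists>n. triv \<sigma> n" by (rule ts)
    show "k - 1 > 0" using j by simp
    show "triv \<sigma> (k - 1)" using sk j by simp
    show "\<not> triv \<sigma> (k - 1 - 1)" using sk j by simp
  qed
  moreover have "cond v (\<lambda>x. \<mu> x * \<chi>2 x) = k - 1"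
  proof (rule tw_cond[OF s(1) c1, of _ "\<lambda>x. \<sigma> x * (\<chi>2 x / \<chi>1 x)"])
    show "\<And>x. x \<in> U 0 \<Longrightarrow> \<mu> x * \<chi>2 x = \<sigma> x * (\<chi>2 x / \<chi>1 x)" using mu(2) nz1 by simp
    show "\<exists>n. triv (\<lambda>x. \<sigma> x * (\<chi>2 x / \<chi>1 x)) n" using ex_triv_mul[OF ts ex_triv_div[OF t2 t1]] .
    show "k - 1 > 0" using j by simp
    have q21: "triv (\<lambda>x. \<chi>2 x / \<chi>1 x) (j - 1)" using triv_swap[OF q12] .
    show "triv (\<lambda>x. \<sigma> x * (\<chi>2 x / \<chi>1 x)) (k - 1)"
      using triv_mul_same[OF sk(1) triv_mono[OF q21, of j]] j by simp
    show "\<not> triv (\<lambda>x. \<sigma> x * (\<chi>2 x / \<chi>1 x)) (k - 1 - 1)"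
    proof
      assume a: "triv (\<lambda>x. \<sigma> x * (\<chi>2 x / \<chi>1 x)) (k - 1 - 1)"
      have "triv \<sigma> (j - 1)"
        unfolding triv_def
      proof
        fix u assume u: "u \<in> U (j - 1)"
        have "\<sigma> u * (\<chi>2 u / \<chi>1 u) = 1" "\<chi>2 u / \<chi>1 u = 1" using a q21 u j unfolding triv_def by auto
        then show "\<sigma> u = 1" by simp
      qed
      then show False using sk by simp
    qed
  qed
  ultimately show "\<exists>\<mu>\<in>charX v \<pi>. cond v \<mu> = k \<and> cond v (\<lambda>x. \<mu> x * \<chi>1 x) = k - 1 \<and> cond v (\<lambda>x. \<mu> x * \<chi>2 x) = k - 1"
    using mu(1) by blast
next
  fix \<mu> assume k: "k = 2" and mu: "\<mu> \<in> charX v \<pi>" and cm: "cond v \<mu> = 2"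
  have mc: "is_char v \<mu>" using mu unfolding charX_def by simp
  have tm: "\<exists>n. triv \<mu> n" using char_triv[OF mc] .
  have mk: "triv \<mu> (Suc 1)" "\<not> triv \<mu> 1" using cond_eq_iff[OF tm, of 2] cm by (auto simp: numeral_2_eq_2)
  have c1k: "triv \<chi>1 (Suc 1)" "\<not> triv \<chi>1 1" using ch1 k by (auto simp: numeral_2_eq_2)
  have c2k: "triv \<chi>2 (Suc 1)" "\<not> triv \<chi>2 1" using ch2 k by (auto simp: numeral_2_eq_2)
  have mm: "mchar \<mu>" using char_mchar[OF mc] .
  have p1: "triv (\<lambda>x. \<mu> x * \<chi>1 x) 1" using q2_pair[OF q _ mm mk m1 c1k] by simp
  have p2: "triv (\<lambda>x. \<mu> x * \<chi>2 x) 1" using q2_pair[OF q _ mm mk m2 c2k] by simp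
  have z: "triv f 0" if "triv f 1" for f using that q2_U0[OF q] unfolding triv_def by blast
  show "cond v (\<lambda>x. \<mu> x * \<chi>1 x) = 0" using cond_le_iff[OF ex_triv_mul[OF tm t1], of 0] z[OF p1] by simp
  show "cond v (\<lambda>x. \<mu> x * \<chi>2 x) = 0" using cond_le_iff[OF ex_triv_mul[OF tm t2], of 0] z[OF p2] by simp
qed

end

context LF2 begin

lemma part4: assumes q: "resq v = 2" and cd: "cond v (\<lambda>x. \<chi>1 x / \<chi>2 x) = k - 1"
  shows "k \<ge> 3 \<and>
      (k \<ge> 4 \<longrightarrow> Max {cond v (\<lambda>x. \<mu> x * \<chi>1 x) + cond v (\<lambda>x. \<mu> x * \<chi>2 x) | \<mu>. \<mu> \<in> charX' v \<pi> k}
                    = 2 * k - 3) \<and>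
      (k = 3 \<longrightarrow> (\<forall>\<mu>\<in>charX v \<pi>. cond v \<mu> = 3 \<longrightarrow>
          {cond v (\<lambda>x. \<mu> x * \<chi>1 x), cond v (\<lambda>x. \<mu> x * \<chi>2 x)} = {2, 0}))"
proof -
  have t12: "\<exists>n. triv (\<lambda>x. \<chi>1 x / \<chi>2 x) n" using ex_triv_div[OF t1 t2] .
  have z: "triv f 0" if "triv f 1" for f using that q2_U0[OF q] unfolding triv_def by blast
  have c12: "triv (\<lambda>x. \<chi>1 x / \<chi>2 x) (k - 1)" "\<not> triv (\<lambda>x. \<chi>1 x / \<chi>2 x) (k - 1 - 1)"
    using cond_eq_iff[OF t12, of "k - 1"] cd k2 by auto
  have k3: "k \<ge> 3"
  proof (rule ccontr)
    assume "\<not> k \<ge> 3"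
    then have "k = 2" using k2 by simp
    then show False using c12 z by simp
  qed
  define j where "j = k - 1"
  have j: "j > 0" "Suc j = k" "k - 1 = j" "j - 1 > 0" "Suc (j - 1) = j" unfolding j_def using k3 by auto
  have gen: "triv (\<lambda>x. \<mu> x * \<chi>1 x) j \<and> triv (\<lambda>x. \<mu> x * \<chi>2 x) j \<and>
       \<not> (\<not> triv (\<lambda>x. \<mu> x * \<chi>1 x) (j - 1) \<and> \<not> triv (\<lambda>x. \<mu> x * \<chi>2 x) (j - 1))"
    if mu: "\<mu> \<in> charX v \<pi>" "cond v \<mu> = k" for \<mu>
  proof -
    have mc: "is_char v \<mu>" using mu unfolding charX_def by simp
    have tm: "\<exists>n. triv \<mu> n" using char_triv[OF mc] .
    have mk: "triv \<mu> (Suc j)" "\<not> triv \<mu> j" using cond_eq_iff[OF tm k0] mu j by auto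
    have mm: "mchar \<mu>" using char_mchar[OF mc] .
    have c1k: "triv \<chi>1 (Suc j)" "\<not> triv \<chi>1 j" using ch1 j by auto
    have c2k: "triv \<chi>2 (Suc j)" "\<not> triv \<chi>2 j" using ch2 j by auto
    have p1: "triv (\<lambda>x. \<mu> x * \<chi>1 x) j" using q2_pair[OF q j(1) mm mk m1 c1k] .
    have p2: "triv (\<lambda>x. \<mu> x * \<chi>2 x) j" using q2_pair[OF q j(1) mm mk m2 c2k] .
    have "\<not> (\<not> triv (\<lambda>x. \<mu> x * \<chi>1 x) (j - 1) \<and> \<not> triv (\<lambda>x. \<mu> x * \<chi>2 x) (j - 1))"
    proof
      assume n: "\<not> triv (\<lambda>x. \<mu> x * \<chi>1 x) (j - 1) \<and> \<not> triv (\<lambda>x. \<mu> x * \<chi>2 x) (j - 1)"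
      have pp: "triv (\<lambda>x. (\<mu> x * \<chi>1 x) * (\<mu> x * \<chi>2 x)) (j - 1)"
        using q2_pair[OF q j(4) mchar_mul[OF mm m1] _ _ mchar_mul[OF mm m2]] p1 p2 n j(5) by simp
      \<comment> \<open>on U (j-1): mu chi1 = mu chi2 = +-1 with equal values\<close>
      have "triv (\<lambda>x. \<chi>1 x / \<chi>2 x) (j - 1)"
        unfolding triv_def
      proof
        fix u assume u: "u \<in> U (j - 1)"
        have u0: "u \<noteq> 0" using u U0_nz by blast
        have nz: "\<mu> u \<noteq> 0" "\<chi>1 u \<noteq> 0" "\<chi>2 u \<noteq> 0" using char_nz mc c1 c2 u0 by auto
        show "\<chi>1 u / \<chi>2 u = 1"
        proof (cases "u \<in> U j")
          case True
          then have "\<mu> u * \<chi>1 u = 1" "\<mu> u * \<chi>2 u = 1" using p1 p2 unfolding triv_def by auto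
          then show ?thesis using nz by (metis divide_self_if mult_cancel_left)
        next
          case False
          have "\<mu> u * \<chi>1 u = -1"
            using q2_val[OF q j(4) mchar_mul[OF mm m1] _ _ u] p1 n j(5) False by simp
          moreover have "\<mu> u * \<chi>2 u = -1"
            using q2_val[OF q j(4) mchar_mul[OF mm m2] _ _ u] p2 n j(5) False by simp
          ultimately show ?thesis using nz by (metis divide_self_if mult_cancel_left neg_equal_0_iff_equal one_neq_zero)
        qed
      qed
      moreover have "k - 1 - 1 = j - 1" unfolding j_def by simp
      ultimately show False using c12(2) by simp
    qed
    then show ?thesis using p1 p2 by blast
  qed
  have part_a: "Max {cond v (\<lambda>x. \<mu> x * \<chi>1 x) + cond v (\<lambda>x. \<mu> x * \<chi>2 x) | \<mu>. \<mu> \<in> charX' v \<pi> k} = 2 * k - 3"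
    if k4: "k \<ge> 4"
  proof -
    define S where "S = {cond v (\<lambda>x. \<mu> x * \<chi>1 x) + cond v (\<lambda>x. \<mu> x * \<chi>2 x) | \<mu>. \<mu> \<in> charX' v \<pi> k}"
    have ub: "s \<le> 2 * k - 3" if sS: "s \<in> S" for s
    proof -
      obtain \<mu> where mu: "\<mu> \<in> charX' v \<pi> k" "s = cond v (\<lambda>x. \<mu> x * \<chi>1 x) + cond v (\<lambda>x. \<mu> x * \<chi>2 x)"
        using sS unfolding S_def by blast
      have mc: "\<mu> \<in> charX v \<pi>" "cond v \<mu> = k" using mu unfolding charX'_def by auto
      have tm: "\<exists>n. triv \<mu> n" using char_triv mc unfolding charX_def by blast
      have tA: "\<exists>n. triv (\<lambda>x. \<mu> x * \<chi>1 x) n" "\<exists>n. triv (\<lambda>x. \<mu> x * \<chi>2 x) n"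
        using ex_triv_mul tm t1 t2 by blast+
      note G = gen[OF mc]
      have le: "cond v (\<lambda>x. \<mu> x * \<chi>1 x) \<le> j" "cond v (\<lambda>x. \<mu> x * \<chi>2 x) \<le> j"
        using cond_le_iff[OF tA(1)] cond_le_iff[OF tA(2)] G by auto
      have "cond v (\<lambda>x. \<mu> x * \<chi>1 x) \<le> j - 1 \<or> cond v (\<lambda>x. \<mu> x * \<chi>2 x) \<le> j - 1"
        using cond_le_iff[OF tA(1)] cond_le_iff[OF tA(2)] G by auto
      then show ?thesis using le mu(2) j by linarith
    qed
    have wit: "2 * k - 3 \<in> S"
    proof -
      obtain \<sigma> where s: "is_char v \<sigma>" "\<sigma> \<pi> = 1" "triv \<sigma> (Suc (k - 3))" "\<not> triv \<sigma> (k - 3)"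
        using ex_exact[of "k - 3"] k4 by auto
      have sk: "triv \<sigma> (k - 2)" "\<not> triv \<sigma> (k - 2 - 1)" using s k4 by (auto simp: Suc_diff_Suc numeral_3_eq_3 numeral_2_eq_2)
      have ts: "\<exists>n. triv \<sigma> n" using sk by blast
      define \<mu> where "\<mu> = (\<lambda>x. \<sigma> x * \<chi>2 \<pi> powi v x / \<chi>2 x)"
      have mu: "\<mu> \<in> charX v \<pi>" "\<And>x. x \<in> U 0 \<Longrightarrow> \<mu> x = \<sigma> x / \<chi>2 x"
        using twist[OF s(1) s(2) c2] unfolding \<mu>_def by auto
      have nz2: "\<And>x. x \<in> U 0 \<Longrightarrow> \<chi>2 x \<noteq> 0" using char_nz[OF c2] U0_nz by blast
      have skk: "triv \<sigma> k" "triv \<sigma> (k - 1)" using triv_mono[OF sk(1)] by auto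
      have "cond v \<mu> = k"
      proof (rule tw_cond[OF s(1) c2, of _ "\<lambda>x. \<sigma> x / \<chi>2 x"])
        show "\<And>x. x \<in> U 0 \<Longrightarrow> \<mu> x = \<sigma> x / \<chi>2 x" by (rule mu(2))
        show "\<exists>n. triv (\<lambda>x. \<sigma> x / \<chi>2 x) n" using ex_triv_div[OF ts t2] .
        show "k > 0" by (rule k0)
        show "triv (\<lambda>x. \<sigma> x / \<chi>2 x) k" using triv_div_same[OF skk(1) ch2(1)] .
        show "\<not> triv (\<lambda>x. \<sigma> x / \<chi>2 x) (k - 1)" using triv_canc_div[OF skk(2)] ch2(2) by auto
      qed
      moreover have "cond v (\<lambda>x. \<mu> x * \<chi>2 x) = k - 2"
      proof (rule tw_cond[OF s(1) c2, of _ \<sigma>])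
        show "\<And>x. x \<in> U 0 \<Longrightarrow> \<mu> x * \<chi>2 x = \<sigma> x" using mu(2) nz2 by simp
        show "\<exists>n. triv \<sigma> n" by (rule ts)
        show "k - 2 > 0" using k4 by simp
        show "triv \<sigma> (k - 2)" using sk by simp
        show "\<not> triv \<sigma> (k - 2 - 1)" using sk by simp
      qed
      moreover have "cond v (\<lambda>x. \<mu> x * \<chi>1 x) = k - 1"
      proof (rule tw_cond[OF s(1) c2, of _ "\<lambda>x. \<sigma> x * (\<chi>1 x / \<chi>2 x)"])
        show "\<And>x. x \<in> U 0 \<Longrightarrow> \<mu> x * \<chi>1 x = \<sigma> x * (\<chi>1 x / \<chi>2 x)" using mu(2) nz2 by simp
        show "\<exists>n. triv (\<lambda>x. \<sigma> x * (\<chi>1 x / \<chi>2 x)) n" using ex_triv_mul[OF ts t12] .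
        show "k - 1 > 0" using k4 by simp
        show "triv (\<lambda>x. \<sigma> x * (\<chi>1 x / \<chi>2 x)) (k - 1)"
          using triv_mul_same[OF skk(2) c12(1)] .
        show "\<not> triv (\<lambda>x. \<sigma> x * (\<chi>1 x / \<chi>2 x)) (k - 1 - 1)"
        proof
          assume "triv (\<lambda>x. \<sigma> x * (\<chi>1 x / \<chi>2 x)) (k - 1 - 1)"
          moreover have "k - 1 - 1 = k - 2" by simp
          ultimately have "triv (\<lambda>x. \<chi>1 x / \<chi>2 x) (k - 2)" using triv_canc_mul[OF sk(1)] by simp
          then show False using c12(2) by (simp add: numeral_2_eq_2)
        qed
      qed
      moreover have "\<mu> \<in> charX' v \<pi> k" using mu(1) calculation(1) by (simp add: charX'_def)
      ultimately have "(k - 1) + (k - 2) \<in> S" unfolding S_def by force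
      moreover have "(k - 1) + (k - 2) = 2 * k - 3" using k4 by simp
      ultimately show ?thesis by simp
    qed
    have fin: "finite S" using ub by (meson finite_atMost finite_subset atMost_iff subsetI)
    show ?thesis unfolding S_def[symmetric] using Max_eqI[OF fin ub wit] .
  qed
  have part_b: "{cond v (\<lambda>x. \<mu> x * \<chi>1 x), cond v (\<lambda>x. \<mu> x * \<chi>2 x)} = {2, 0}"
    if k: "k = 3" and mu: "\<mu> \<in> charX v \<pi>" "cond v \<mu> = 3" for \<mu>
  proof -
    have mc: "is_char v \<mu>" using mu unfolding charX_def by simp
    have tm: "\<exists>n. triv \<mu> n" using char_triv[OF mc] .
    have tA: "\<exists>n. triv (\<lambda>x. \<mu> x * \<chi>1 x) n" "\<exists>n. triv (\<lambda>x. \<mu> x * \<chi>2 x) n"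
      using ex_triv_mul tm t1 t2 by blast+
    have jj: "j = 2" using j k by simp
    note G = gen[OF mu(1)] 
    have G': "triv (\<lambda>x. \<mu> x * \<chi>1 x) 2" "triv (\<lambda>x. \<mu> x * \<chi>2 x) 2"
       "\<not> (\<not> triv (\<lambda>x. \<mu> x * \<chi>1 x) 1 \<and> \<not> triv (\<lambda>x. \<mu> x * \<chi>2 x) 1)"
      using G mu(2) k jj by auto
    have val: "cond v f = 0 \<or> cond v f = 2" "cond v f = 2 \<longleftrightarrow> \<not> triv f 1" "cond v f = 0 \<longleftrightarrow> triv f 0"
      if tf: "\<exists>n. triv f n" "triv f 2" for f
    proof -
      have le: "cond v f \<le> 2" using cond_le_iff[OF tf(1)] tf(2) by simp
      have "cond v f \<noteq> 1" using cond_eq_iff[OF tf(1), of 1] z by auto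
      moreover have "cond v f \<le> 1 \<longleftrightarrow> triv f 1" using cond_le_iff[OF tf(1), of 1] by simp
      moreover have "cond v f \<le> 0 \<longleftrightarrow> triv f 0" using cond_le_iff[OF tf(1), of 0] by simp
      ultimately show "cond v f = 0 \<or> cond v f = 2" "cond v f = 2 \<longleftrightarrow> \<not> triv f 1" "cond v f = 0 \<longleftrightarrow> triv f 0"
        using le by auto
    qed
    note v1 = val[OF tA(1) G'(1)] and v2 = val[OF tA(2) G'(2)]
    have "\<not> (triv (\<lambda>x. \<mu> x * \<chi>1 x) 0 \<and> triv (\<lambda>x. \<mu> x * \<chi>2 x) 0)"
    proof
      assume a: "triv (\<lambda>x. \<mu> x * \<chi>1 x) 0 \<and> triv (\<lambda>x. \<mu> x * \<chi>2 x) 0"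
      have "triv (\<lambda>x. \<chi>1 x / \<chi>2 x) 0"
        unfolding triv_def
      proof
        fix u assume u: "u \<in> U 0"
        have u0: "u \<noteq> 0" using u U0_nz by blast
        have nz: "\<mu> u \<noteq> 0" "\<chi>1 u \<noteq> 0" "\<chi>2 u \<noteq> 0" using char_nz mc c1 c2 u0 by auto
        have "\<mu> u * \<chi>1 u = 1" "\<mu> u * \<chi>2 u = 1" using a u unfolding triv_def by auto
        then show "\<chi>1 u / \<chi>2 u = 1" using nz by (metis divide_self_if mult_cancel_left)
      qed
      then have "triv (\<lambda>x. \<chi>1 x / \<chi>2 x) 1" using triv_mono by blast
      then show False using c12 k by simp
    qed
    then have n0: "\<not> (cond v (\<lambda>x. \<mu> x * \<chi>1 x) = 0 \<and> cond v (\<lambda>x. \<mu> x * \<chi>2 x) = 0)"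
      using v1(3) v2(3) by blast
    have n2: "\<not> (cond v (\<lambda>x. \<mu> x * \<chi>1 x) = 2 \<and> cond v (\<lambda>x. \<mu> x * \<chi>2 x) = 2)"
      using v1(2) v2(2) G'(3) by blast
    define a where "a = cond v (\<lambda>x. \<mu> x * \<chi>1 x)"
    define b where "b = cond v (\<lambda>x. \<mu> x * \<chi>2 x)"
    have "(a = 0 \<or> a = 2)" "(b = 0 \<or> b = 2)" "\<not> (a = 0 \<and> b = 0)" "\<not> (a = 2 \<and> b = 2)"
      using v1(1) v2(1) n0 n2 unfolding a_def b_def by auto
    then have "{a, b} = {2, 0}" by auto
    then show ?thesis unfolding a_def b_def .
  qed
  show ?thesis using k3 part_a part_b by (intro conjI impI allI ballI) auto
qed

end

theorem lemma2p2:
  fixes v :: "'a::field_char_0 \<Rightarrow> int" and \<pi> :: 'a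
    and \<chi>1 \<chi>2 :: "'a \<Rightarrow> complex" and k :: nat
  assumes "local_field v" and "\<pi> \<noteq> 0" and "v \<pi> = 1"
    and "is_char v \<chi>1" and "is_char v \<chi>2"
    and "k \<ge> 2" and "cond v \<chi>1 = k" and "cond v \<chi>2 = k"
  shows
   "((resq v > 3 \<or> (resq v = 3 \<and> cond v (\<lambda>x. \<chi>1 x / \<chi>2 x) < k)) \<longrightarrow>
      (\<exists>\<mu>\<in>charX v \<pi>. cond v \<mu> = k \<and> cond v (\<lambda>x. \<mu> x * \<chi>1 x) = k
                         \<and> cond v (\<lambda>x. \<mu> x * \<chi>2 x) = k)) \<and>
   ((resq v = 3 \<and> cond v (\<lambda>x. \<chi>1 x / \<chi>2 x) = k) \<longrightarrow>
      Max {cond v (\<lambda>x. \<mu> x * \<chi>1 x) + cond v (\<lambda>x. \<mu> x * \<chi>2 x) | \<mu>. \<mu> \<in> charX' v \<pi> k}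
        = 2 * k - 1) \<and>
   ((resq v = 2 \<and> cond v (\<lambda>x. \<chi>1 x / \<chi>2 x) < k - 1) \<longrightarrow>
      (k > 2 \<longrightarrow> (\<exists>\<mu>\<in>charX v \<pi>. cond v \<mu> = k \<and> cond v (\<lambda>x. \<mu> x * \<chi>1 x) = k - 1
                         \<and> cond v (\<lambda>x. \<mu> x * \<chi>2 x) = k - 1)) \<and>
      (k = 2 \<longrightarrow> (\<forall>\<mu>\<in>charX v \<pi>. cond v \<mu> = 2 \<longrightarrow>
                         cond v (\<lambda>x. \<mu> x * \<chi>1 x) = 0 \<and> cond v (\<lambda>x. \<mu> x * \<chi>2 x) = 0))) \<and>
   ((resq v = 2 \<and> cond v (\<lambda>x. \<chi>1 x / \<chi>2 x) = k - 1) \<longrightarrow>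
      k \<ge> 3 \<and>
      (k \<ge> 4 \<longrightarrow> Max {cond v (\<lambda>x. \<mu> x * \<chi>1 x) + cond v (\<lambda>x. \<mu> x * \<chi>2 x) | \<mu>. \<mu> \<in> charX' v \<pi> k}
                    = 2 * k - 3) \<and>
      (k = 3 \<longrightarrow> (\<forall>\<mu>\<in>charX v \<pi>. cond v \<mu> = 3 \<longrightarrow>
          {cond v (\<lambda>x. \<mu> x * \<chi>1 x), cond v (\<lambda>x. \<mu> x * \<chi>2 x)} = {2, 0})))"
proof -
  interpret L: LF2 v \<pi> \<chi>1 \<chi>2 k
    using assms by (simp add: LF2_def LF2_axioms_def LF_def)
  note p1 = impI[OF L.part1]
  note p2 = impI[OF L.part2[OF conjunct1 conjunct2]]
  note p3 = impI[OF L.part3[OF conjunct1 conjunct2]]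
  note p4 = impI[OF L.part4[OF conjunct1 conjunct2]]
  show ?thesis
    by (intro conjI p1 p2 p3 p4) simp_all
qed

end
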